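(* Let $x\in R$ be a nonzero left integral of $R$, and assume the space of left integrals of $R$ is $kx$ and that there is a linear functional $\alpha_R:R\to k$ with $xr=\alpha_R(r)x$ for all $r\in R$. Let $\Lambda$ be a nonzero left integral of $H$ and $\alpha_H\in G(H^* )$ its distinguished grouplike, $\Lambda h=\alpha_H(h)\Lambda$. Then: (1) $j(\Lambda)x$ is a nonzero left integral of $A$; (2) there is $\gamma\in G(H^* )$ such that $h\cdot x=\gamma(h)x$ for all $h\in H$; (3) the distinguished grouplike element $\alpha_A\in G(A^* )$ (defined by $ta=\alpha_A(a)t$ for a nonzero left integral $t$ of $A$ and all $a\in A$) satisfies $\alpha_A(rj(h))=\alpha_R(r)\,(\gamma^{-1}\alpha_H)(h)$ for all $r\in R$, $h\in H$, i.e. $\alpha_A=\alpha_R\#\gamma^{-1}\alpha_H$.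
   Context: Let $A,H$ be finite-dimensional Hopf algebras over a field $k$ with Hopf algebra maps $p:A\to H$, $j:H\to A$ such that $pj=\mathrm{id}_H$. Let $R=A^{\mathrm{co}H}=\{a\in A:(\mathrm{id}\otimes p)\Delta(a)=a\otimes1\}$; it is a subalgebra of $A$ and a braided Hopf algebra in the category of Yetter–Drinfeld modules over $H$, with $H$-action $h\cdot r=j(h_1)rj(S h_2)$, coaction $(p\otimes\mathrm{id})\Delta$ and comultiplication $\Delta_R(r)=r_1jpS(r_2)\otimes r_3$. The multiplication map $R\otimes H\to A$, $r\otimes h\mapsto rj(h)$, is bijective (so $A\cong R\#H$). A left integral of $R$ is $x\in R$ with $rx=\epsilon(r)x$ for all $r\in R$; a left integral of a Hopf algebra $B$ is $t\in B$ with $bt=\epsilon(b)t$ for all $b\in B$. $G(H^* )$ denotes the algebra maps $H\to k$. *)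

theory Defs
  imports Main
begin

text \<open>
Finite-dimensional Hopf algebras over a field 'k, presented by a finite basis
indexed by a finite type 'i and structure constants.  An element is a coefficient
vector 'i => 'k; the tensor square is ('i * 'i) => 'k; linear functionals are
dual coefficient vectors 'i => 'k.
  e_i e_j = sum_l hm i j l e_l,   1 = sum_i hu i e_i,
  Delta e_i = sum_(j,l) hc i j l e_j (x) e_l,   eps e_i = he i,
  S e_i = sum_j hs i j e_j.
\<close>

record ('i, 'k) hopf_data =
  hm :: "'i \<Rightarrow> 'i \<Rightarrow> 'i \<Rightarrow> 'k"
  hu :: "'i \<Rightarrow> 'k"
  hc :: "'i \<Rightarrow> 'i \<Rightarrow> 'i \<Rightarrow> 'k"
  he :: "'i \<Rightarrow> 'k"
  hs :: "'i \<Rightarrow> 'i \<Rightarrow> 'k"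

definition vzero :: "'i \<Rightarrow> 'k::field" where
  "vzero = (\<lambda>_. 0)"

definition vscale :: "'k::field \<Rightarrow> ('i \<Rightarrow> 'k) \<Rightarrow> ('i \<Rightarrow> 'k)" where
  "vscale c x = (\<lambda>i. c * x i)"

definition ev :: "'i \<Rightarrow> 'i \<Rightarrow> 'k::field" where
  "ev i = (\<lambda>j. if j = i then 1 else 0)"

definition hmul :: "('i::finite, 'k::field) hopf_data \<Rightarrow> ('i \<Rightarrow> 'k) \<Rightarrow> ('i \<Rightarrow> 'k) \<Rightarrow> ('i \<Rightarrow> 'k)" where
  "hmul H x y = (\<lambda>l. \<Sum>i\<in>UNIV. \<Sum>j\<in>UNIV. x i * y j * hm H i j l)"

definition hone :: "('i::finite, 'k::field) hopf_data \<Rightarrow> ('i \<Rightarrow> 'k)" where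
  "hone H = hu H"

definition hcomul :: "('i::finite, 'k::field) hopf_data \<Rightarrow> ('i \<Rightarrow> 'k) \<Rightarrow> ('i \<times> 'i \<Rightarrow> 'k)" where
  "hcomul H x = (\<lambda>(j, l). \<Sum>i\<in>UNIV. x i * hc H i j l)"

definition hcounit :: "('i::finite, 'k::field) hopf_data \<Rightarrow> ('i \<Rightarrow> 'k) \<Rightarrow> 'k" where
  "hcounit H x = (\<Sum>i\<in>UNIV. x i * he H i)"

definition hanti :: "('i::finite, 'k::field) hopf_data \<Rightarrow> ('i \<Rightarrow> 'k) \<Rightarrow> ('i \<Rightarrow> 'k)" where
  "hanti H x = (\<lambda>j. \<Sum>i\<in>UNIV. x i * hs H i j)"

text \<open>Multiplication in the tensor algebra H (x) H.\<close>
definition hmul2 :: "('i::finite, 'k::field) hopf_data \<Rightarrow> ('i \<times> 'i \<Rightarrow> 'k) \<Rightarrow> ('i \<times> 'i \<Rightarrow> 'k) \<Rightarrow> ('i \<times> 'i \<Rightarrow> 'k)" where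
  "hmul2 H t s = (\<lambda>(l1, l2). \<Sum>p\<in>UNIV. \<Sum>q\<in>UNIV.
      t p * s q * hm H (fst p) (fst q) l1 * hm H (snd p) (snd q) l2)"

text \<open>(Delta (x) id) and (id (x) Delta) on the tensor square.\<close>
definition comul_left :: "('i::finite, 'k::field) hopf_data \<Rightarrow> ('i \<times> 'i \<Rightarrow> 'k) \<Rightarrow> ('i \<times> 'i \<times> 'i \<Rightarrow> 'k)" where
  "comul_left H t = (\<lambda>(a, b, c). \<Sum>p\<in>UNIV. t (p, c) * hcomul H (ev p) (a, b))"

definition comul_right :: "('i::finite, 'k::field) hopf_data \<Rightarrow> ('i \<times> 'i \<Rightarrow> 'k) \<Rightarrow> ('i \<times> 'i \<times> 'i \<Rightarrow> 'k)" where
  "comul_right H t = (\<lambda>(a, b, c). \<Sum>q\<in>UNIV. t (a, q) * hcomul H (ev q) (b, c))"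

definition is_hopf :: "('i::finite, 'k::field) hopf_data \<Rightarrow> bool" where
  "is_hopf H \<longleftrightarrow>
     (\<forall>x y z. hmul H (hmul H x y) z = hmul H x (hmul H y z)) \<and>
     (\<forall>x. hmul H (hone H) x = x \<and> hmul H x (hone H) = x) \<and>
     (\<forall>x. comul_left H (hcomul H x) = comul_right H (hcomul H x)) \<and>
     (\<forall>x. (\<lambda>l. \<Sum>j\<in>UNIV. hcounit H (ev j) * hcomul H x (j, l)) = x) \<and>
     (\<forall>x. (\<lambda>j. \<Sum>l\<in>UNIV. hcomul H x (j, l) * hcounit H (ev l)) = x) \<and>
     (\<forall>x y. hcomul H (hmul H x y) = hmul2 H (hcomul H x) (hcomul H y)) \<and>
     hcomul H (hone H) = (\<lambda>(a, b). hone H a * hone H b) \<and>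
     (\<forall>x y. hcounit H (hmul H x y) = hcounit H x * hcounit H y) \<and>
     hcounit H (hone H) = 1 \<and>
     (\<forall>x. (\<lambda>m. \<Sum>p\<in>UNIV. hcomul H x p * hmul H (hanti H (ev (fst p))) (ev (snd p)) m)
            = vscale (hcounit H x) (hone H)) \<and>
     (\<forall>x. (\<lambda>m. \<Sum>p\<in>UNIV. hcomul H x p * hmul H (ev (fst p)) (hanti H (ev (snd p))) m)
            = vscale (hcounit H x) (hone H))"

text \<open>Linear maps given by matrices: f(e_i) = sum_j P i j e_j.\<close>
definition lin :: "('i::finite \<Rightarrow> 'j \<Rightarrow> 'k::field) \<Rightarrow> ('i \<Rightarrow> 'k) \<Rightarrow> ('j \<Rightarrow> 'k)" where
  "lin P x = (\<lambda>j. \<Sum>i\<in>UNIV. x i * P i j)"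

definition lin2 :: "('i::finite \<Rightarrow> 'j \<Rightarrow> 'k::field) \<Rightarrow> ('i \<times> 'i \<Rightarrow> 'k) \<Rightarrow> ('j \<times> 'j \<Rightarrow> 'k)" where
  "lin2 P t = (\<lambda>(a, b). \<Sum>p\<in>UNIV. t p * P (fst p) a * P (snd p) b)"

definition is_hopf_map ::
  "('i::finite, 'k::field) hopf_data \<Rightarrow> ('j::finite, 'k) hopf_data \<Rightarrow> ('i \<Rightarrow> 'j \<Rightarrow> 'k) \<Rightarrow> bool" where
  "is_hopf_map A H P \<longleftrightarrow>
     (\<forall>x y. lin P (hmul A x y) = hmul H (lin P x) (lin P y)) \<and>
     lin P (hone A) = hone H \<and>
     (\<forall>x. hcomul H (lin P x) = lin2 P (hcomul A x)) \<and>
     (\<forall>x. hcounit H (lin P x) = hcounit A x)"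

text \<open>Coinvariants R = A^{co H} = { a. (id (x) p) Delta a = a (x) 1 }.\<close>
definition coinv ::
  "('a::finite, 'k::field) hopf_data \<Rightarrow> ('h::finite, 'k) hopf_data \<Rightarrow> ('a \<Rightarrow> 'h \<Rightarrow> 'k) \<Rightarrow> ('a \<Rightarrow> 'k) set" where
  "coinv A H P = {a. (\<lambda>(i, b). \<Sum>l\<in>UNIV. hcomul A a (i, l) * P l b) = (\<lambda>(i, b). a i * hone H b)}"

definition is_left_integral_in ::
  "('a::finite, 'k::field) hopf_data \<Rightarrow> ('a \<Rightarrow> 'k) set \<Rightarrow> ('a \<Rightarrow> 'k) \<Rightarrow> bool" where
  "is_left_integral_in A S x \<longleftrightarrow> x \<in> S \<and> (\<forall>r\<in>S. hmul A r x = vscale (hcounit A r) x)"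

definition is_left_integral :: "('a::finite, 'k::field) hopf_data \<Rightarrow> ('a \<Rightarrow> 'k) \<Rightarrow> bool" where
  "is_left_integral A t \<longleftrightarrow> is_left_integral_in A UNIV t"

text \<open>H-action on R: h . r = j(h_1) r j(S h_2).\<close>
definition hact ::
  "('a::finite, 'k::field) hopf_data \<Rightarrow> ('h::finite, 'k) hopf_data \<Rightarrow> ('h \<Rightarrow> 'a \<Rightarrow> 'k)
     \<Rightarrow> ('h \<Rightarrow> 'k) \<Rightarrow> ('a \<Rightarrow> 'k) \<Rightarrow> ('a \<Rightarrow> 'k)" where
  "hact A H J h r = (\<lambda>m. \<Sum>p\<in>UNIV. hcomul H h p *
      hmul A (hmul A (lin J (ev (fst p))) r) (lin J (hanti H (ev (snd p)))) m)"

definition fapp :: "('i::finite \<Rightarrow> 'k::field) \<Rightarrow> ('i \<Rightarrow> 'k) \<Rightarrow> 'k" where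
  "fapp \<phi> x = (\<Sum>i\<in>UNIV. \<phi> i * x i)"

text \<open>G(H^*): algebra maps H -> k.\<close>
definition grouplike_dual :: "('i::finite, 'k::field) hopf_data \<Rightarrow> ('i \<Rightarrow> 'k) \<Rightarrow> bool" where
  "grouplike_dual H \<phi> \<longleftrightarrow>
     (\<forall>x y. fapp \<phi> (hmul H x y) = fapp \<phi> x * fapp \<phi> y) \<and> fapp \<phi> (hone H) = 1"

text \<open>Convolution product in H^*, its unit is the counit, and the inverse.\<close>
definition conv :: "('i::finite, 'k::field) hopf_data \<Rightarrow> ('i \<Rightarrow> 'k) \<Rightarrow> ('i \<Rightarrow> 'k) \<Rightarrow> ('i \<Rightarrow> 'k)" where
  "conv H \<phi> \<psi> = (\<lambda>i. \<Sum>p\<in>UNIV. hc H i (fst p) (snd p) * \<phi> (fst p) * \<psi> (snd p))"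

definition conv_inv :: "('i::finite, 'k::field) hopf_data \<Rightarrow> ('i \<Rightarrow> 'k) \<Rightarrow> ('i \<Rightarrow> 'k)" where
  "conv_inv H \<phi> = (THE \<psi>. conv H \<psi> \<phi> = he H \<and> conv H \<phi> \<psi> = he H)"

end

theory Submission
  imports Defs "HOL-Library.Function_Algebras" "HOL.Vector_Spaces"
begin


lemma sum_fun_app: "(\<Sum>i\<in>A. f i) x = (\<Sum>i\<in>A. f i x)"
  by (induct A rule: infinite_finite_induct) auto

lemma sum_pair: "(\<Sum>p\<in>(UNIV::('a::finite\<times>'b::finite) set). f p) = (\<Sum>a\<in>UNIV. \<Sum>b\<in>UNIV. f (a,b))"
  by (simp only: sum.cartesian_product UNIV_Times_UNIV case_prod_eta)

lemma vscale_apply[simp]: "vscale c x i = c * x i"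
  by (simp add: vscale_def)

lemma vzero_eq: "vzero = 0"
  by (simp add: vzero_def zero_fun_def)

lemma ev_apply: "ev i j = (if j = i then (1::'k::field) else 0)"
  by (simp add: ev_def)

lemma sum_ev_left[simp]: "(\<Sum>j\<in>(UNIV::'i::finite set). ev i j * f j) = (f i :: 'k::field)"
proof -
  have "(\<Sum>j\<in>UNIV. ev i j * f j) = (\<Sum>j\<in>UNIV. if j = i then f j else 0)" by (rule sum.cong) (auto simp: ev_def)
  then show ?thesis by (simp add: sum.delta)
qed

lemma sum_ev_right[simp]: "(\<Sum>j\<in>(UNIV::'i::finite set). f j * ev i j) = (f i :: 'k::field)"
proof -
  have "(\<Sum>j\<in>UNIV. f j * ev i j) = (\<Sum>j\<in>UNIV. if j = i then f j else 0)" by (rule sum.cong) (auto simp: ev_def)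
  then show ?thesis by (simp add: sum.delta)
qed

lemma sum_ev_left'[simp]: "(\<Sum>j\<in>(UNIV::'i::finite set). ev j i * f j) = (f i :: 'k::field)"
proof -
  have "(\<Sum>j\<in>UNIV. ev j i * f j) = (\<Sum>j\<in>UNIV. if j = i then f j else 0)" by (rule sum.cong) (auto simp: ev_def)
  then show ?thesis by (simp add: sum.delta)
qed

lemma sum_ev_right'[simp]: "(\<Sum>j\<in>(UNIV::'i::finite set). f j * ev j i) = (f i :: 'k::field)"
proof -
  have "(\<Sum>j\<in>UNIV. f j * ev j i) = (\<Sum>j\<in>UNIV. if j = i then f j else 0)" by (rule sum.cong) (auto simp: ev_def)
  then show ?thesis by (simp add: sum.delta)
qed

lemma vec_decomp: "(x::'i::finite \<Rightarrow> 'k::field) = (\<Sum>i\<in>UNIV. vscale (x i) (ev i))"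
  by (rule ext) (simp add: sum_fun_app)

definition islin :: "(('i::finite \<Rightarrow> 'k::field) \<Rightarrow> 'k) \<Rightarrow> bool" where
  "islin f \<longleftrightarrow> (\<forall>x y. f (x + y) = f x + f y) \<and> (\<forall>c x. f (vscale c x) = c * f x)"

lemma islinD: assumes "islin f" shows "f (x + y) = f x + f y" "f (vscale c x) = c * f x"
  using assms by (auto simp: islin_def)

lemma islin_zero: assumes "islin f" shows "f 0 = 0"
proof -
  have "f (vscale 0 0) = 0 * f 0" by (rule islinD(2)[OF assms])
  moreover have "vscale 0 (0::'a\<Rightarrow>'b) = 0" by (rule ext) simp
  ultimately show ?thesis by simp
qed

lemma islin_sum: assumes "islin f" shows "f (\<Sum>i\<in>A. v i) = (\<Sum>i\<in>A. f (v i))"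
proof (induct A rule: infinite_finite_induct)
  case (infinite A) then show ?case by (simp only: sum.infinite[OF infinite] islin_zero[OF assms])
next
  case empty then show ?case by (simp only: sum.empty islin_zero[OF assms])
next
  case (insert x F) then show ?case by (simp only: sum.insert[OF insert(1,2)] islinD(1)[OF assms])
qed

lemma islin_expand: assumes "islin f" shows "f x = (\<Sum>i\<in>UNIV. x i * f (ev i))"
proof -
  have "f x = f (\<Sum>i\<in>UNIV. vscale (x i) (ev i))" by (subst vec_decomp) simp
  also have "\<dots> = (\<Sum>i\<in>UNIV. x i * f (ev i))"
    by (simp add: islin_sum[OF assms] islinD[OF assms])
  finally show ?thesis .
qed

lemma islin_eqI: assumes "islin f" "islin g" "\<And>i. f (ev i) = g (ev i)" shows "f x = g x"
proof -
  have "f x = (\<Sum>i\<in>UNIV. x i * f (ev i))" by (rule islin_expand[OF assms(1)])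
  also have "\<dots> = (\<Sum>i\<in>UNIV. x i * g (ev i))" using assms(3) by simp
  also have "\<dots> = g x" by (rule islin_expand[OF assms(2), symmetric])
  finally show ?thesis .
qed

lemma islin_coord: "islin (\<lambda>x. x i)"
  by (simp add: islin_def)

lemma islin_vec_eqI: assumes "\<And>z. islin (\<lambda>x. f x z)" "\<And>z. islin (\<lambda>x. g x z)" "\<And>i. f (ev i) = g (ev i)"
  shows "f x = g x"
proof (rule ext)
  fix z show "f x z = g x z"
    using islin_eqI[of "\<lambda>x. f x z" "\<lambda>x. g x z" x] assms by simp
qed

context fixes H :: "('i::finite, 'k::field) hopf_data" begin

lemma hmul_add1[simp]: "hmul H (x + y) z = hmul H x z + hmul H y z"
  by (rule ext) (simp add: hmul_def algebra_simps sum.distrib)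
lemma hmul_add2[simp]: "hmul H z (x + y) = hmul H z x + hmul H z y"
  by (rule ext) (simp add: hmul_def algebra_simps sum.distrib)
lemma hmul_scale1[simp]: "hmul H (vscale c x) z = vscale c (hmul H x z)"
  by (rule ext) (simp add: hmul_def algebra_simps sum_distrib_left)
lemma hmul_scale2[simp]: "hmul H z (vscale c x) = vscale c (hmul H z x)"
  by (rule ext) (simp add: hmul_def algebra_simps sum_distrib_left)
lemma hanti_add[simp]: "hanti H (x + y) = hanti H x + hanti H y"
  by (rule ext) (simp add: hanti_def algebra_simps sum.distrib)
lemma hanti_scale[simp]: "hanti H (vscale c x) = vscale c (hanti H x)"
  by (rule ext) (simp add: hanti_def algebra_simps sum_distrib_left)
lemma hcounit_add[simp]: "hcounit H (x + y) = hcounit H x + hcounit H y"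
  by (simp add: hcounit_def algebra_simps sum.distrib)
lemma hcounit_scale[simp]: "hcounit H (vscale c x) = c * hcounit H x"
  by (simp add: hcounit_def algebra_simps sum_distrib_left)
lemma hcomul_add[simp]: "hcomul H (x + y) = hcomul H x + hcomul H y"
  by (rule ext) (simp add: hcomul_def algebra_simps sum.distrib split: prod.splits)
lemma hcomul_scale[simp]: "hcomul H (vscale c x) p = c * hcomul H x p"
  by (simp add: hcomul_def algebra_simps sum_distrib_left split: prod.splits)

lemma hmul_zero1[simp]: "hmul H 0 z = 0"
  by (rule ext) (simp add: hmul_def)
lemma hmul_zero2[simp]: "hmul H z 0 = 0"
  by (rule ext) (simp add: hmul_def)
lemma hanti_zero[simp]: "hanti H 0 = 0"
  by (rule ext) (simp add: hanti_def)
lemma hcounit_zero[simp]: "hcounit H 0 = 0"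
  by (simp add: hcounit_def)

end

lemma lin_add[simp]: "lin P (x + y) = lin P x + lin P y"
  by (rule ext) (simp add: lin_def algebra_simps sum.distrib)
lemma lin_scale[simp]: "lin P (vscale c x) = vscale c (lin P x)"
  by (rule ext) (simp add: lin_def algebra_simps sum_distrib_left)
lemma lin_zero[simp]: "lin P 0 = 0"
  by (rule ext) (simp add: lin_def)
lemma fapp_add[simp]: "fapp \<phi> (x + y) = fapp \<phi> x + fapp \<phi> y"
  by (simp add: fapp_def algebra_simps sum.distrib)
lemma fapp_scale[simp]: "fapp \<phi> (vscale c x) = c * fapp \<phi> x"
  by (simp add: fapp_def algebra_simps sum_distrib_left)
lemma fapp_ev[simp]: "fapp \<phi> (ev i) = \<phi> i"
  by (simp add: fapp_def)

section \<open>Sweedler sums\<close>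

definition sw :: "('i::finite, 'k::field) hopf_data \<Rightarrow> ('i \<Rightarrow> 'k) \<Rightarrow> (('i \<Rightarrow> 'k) \<Rightarrow> ('i \<Rightarrow> 'k) \<Rightarrow> 'k) \<Rightarrow> 'k" where
  "sw H x F = (\<Sum>p\<in>UNIV. hcomul H x p * F (ev (fst p)) (ev (snd p)))"

lemma sw_add[simp]: "sw H (x + y) F = sw H x F + sw H y F"
  by (simp add: sw_def algebra_simps sum.distrib)
lemma sw_scale[simp]: "sw H (vscale c x) F = c * sw H x F"
  by (simp add: sw_def sum_distrib_left mult.assoc)
lemma sw_zero[simp]: "sw H 0 F = 0"
  by (simp add: sw_def hcomul_def zero_fun_def)
lemma sw_plus_fun: "sw H x (\<lambda>a b. F a b + G a b) = sw H x F + sw H x G"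
  by (simp add: sw_def algebra_simps sum.distrib)
lemma sw_cmult: "sw H x (\<lambda>a b. c * F a b) = c * sw H x F"
  unfolding sw_def sum_distrib_left by (simp add: mult.left_commute)
lemma sw_cmult2: "sw H x (\<lambda>a b. F a b * c) = sw H x F * c"
  unfolding sw_def sum_distrib_right by (simp add: mult.assoc)
lemma sw_cong: "(\<And>a b. F a b = G a b) \<Longrightarrow> sw H x F = sw H x G"
  by (simp add: sw_def)
lemma sw_sum_fun: "sw H x (\<lambda>a b. \<Sum>i\<in>I. F i a b) = (\<Sum>i\<in>I. sw H x (F i))"
  by (induct I rule: infinite_finite_induct) (auto simp: sw_plus_fun sw_def)

lemma islin_sw: "islin (\<lambda>x. sw H x F)"
  by (simp add: islin_def)

definition bilin :: "(('i::finite \<Rightarrow> 'k::field) \<Rightarrow> ('j::finite \<Rightarrow> 'k) \<Rightarrow> 'k) \<Rightarrow> bool" where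
  "bilin F \<longleftrightarrow> (\<forall>b. islin (\<lambda>a. F a b)) \<and> (\<forall>a. islin (\<lambda>b. F a b))"

lemma bilinD: assumes "bilin F"
  shows "F (x + y) b = F x b + F y b" "F (vscale c x) b = c * F x b"
        "F a (x + y) = F a x + F a y" "F a (vscale c x) = c * F a x"
  using assms by (auto simp: bilin_def islin_def)

lemma sw_vec: assumes "islin f"
  shows "f (\<lambda>z. sw H t (\<lambda>u v. K u v z)) = sw H t (\<lambda>u v. f (K u v))"
proof -
  have "(\<lambda>z. sw H t (\<lambda>u v. K u v z)) = (\<Sum>p\<in>UNIV. vscale (hcomul H t p) (K (ev (fst p)) (ev (snd p))))"
    by (rule ext) (simp add: sw_def sum_fun_app)
  then show ?thesis by (simp add: islin_sum[OF assms] islinD[OF assms] sw_def)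
qed




lemma sum_rot3: "(\<Sum>a\<in>A. \<Sum>b\<in>B. \<Sum>c\<in>C. f a b c) = (\<Sum>b\<in>B. \<Sum>c\<in>C. \<Sum>a\<in>A. f a b c)"
proof -
  have "(\<Sum>a\<in>A. \<Sum>b\<in>B. \<Sum>c\<in>C. f a b c) = (\<Sum>b\<in>B. \<Sum>a\<in>A. \<Sum>c\<in>C. f a b c)"
    by (rule sum.swap)
  also have "\<dots> = (\<Sum>b\<in>B. \<Sum>c\<in>C. \<Sum>a\<in>A. f a b c)"
    by (rule sum.cong[OF refl], rule sum.swap)
  finally show ?thesis .
qed

lemma sum_rot4: "(\<Sum>a\<in>A. \<Sum>b\<in>B. \<Sum>c\<in>C. \<Sum>d\<in>D. f a b c d) = (\<Sum>b\<in>B. \<Sum>c\<in>C. \<Sum>d\<in>D. \<Sum>a\<in>A. f a b c d)"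
proof -
  have "(\<Sum>a\<in>A. \<Sum>b\<in>B. \<Sum>c\<in>C. \<Sum>d\<in>D. f a b c d) = (\<Sum>b\<in>B. \<Sum>a\<in>A. \<Sum>c\<in>C. \<Sum>d\<in>D. f a b c d)"
    by (rule sum.swap)
  also have "\<dots> = (\<Sum>b\<in>B. \<Sum>c\<in>C. \<Sum>d\<in>D. \<Sum>a\<in>A. f a b c d)"
    by (rule sum.cong[OF refl], rule sum_rot3)
  finally show ?thesis .
qed

lemma sum_if_out: "(\<Sum>j\<in>A. if P then g j else 0) = (if P then (\<Sum>j\<in>A. g j) else (0::'a::comm_monoid_add))"
  by simp

lemma if01_mult: "(if P then 1 else 0) * (x::'a::semiring_1) = (if P then x else 0)"
  "x * (if P then 1 else 0) = (if P then x else 0)"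
  "(if P then x else 0) * y = (if P then x * y else 0)"
  "y * (if P then x else 0) = (if P then y * x else 0)"
  by auto

lemma ev_mul: "hmul H (ev a) (ev b) = (\<lambda>l. hm H a b l)"
  by (rule ext) (simp add: hmul_def ev_def if01_mult sum_if_out sum.delta)

lemma ev_lin: "lin P (ev i) = (\<lambda>j. P i j)"
  by (rule ext) (simp add: lin_def)

lemma bilin_expand1: assumes "bilin F" shows "F x w = (\<Sum>i\<in>UNIV. x i * F (ev i) w)"
  using islin_expand[of "\<lambda>a. F a w" x] assms by (simp add: bilin_def)
lemma bilin_expand2: assumes "bilin F" shows "F w x = (\<Sum>i\<in>UNIV. x i * F w (ev i))"
  using islin_expand[of "\<lambda>a. F w a" x] assms by (simp add: bilin_def)

context
  fixes H :: "('i::finite, 'k::field) hopf_data"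
  assumes hopf: "is_hopf H"
begin

lemma assoc: "hmul H (hmul H x y) z = hmul H x (hmul H y z)"
  using hopf by (simp add: is_hopf_def)
lemma one_left[simp]: "hmul H (hone H) x = x"
  using hopf by (simp add: is_hopf_def)
lemma one_right[simp]: "hmul H x (hone H) = x"
  using hopf by (simp add: is_hopf_def)
lemma counit_mult: "hcounit H (hmul H x y) = hcounit H x * hcounit H y"
  using hopf by (simp add: is_hopf_def)
lemma counit_one[simp]: "hcounit H (hone H) = 1"
  using hopf by (simp add: is_hopf_def)

lemma sw_coassoc:
  "sw H x (\<lambda>a b. sw H a (\<lambda>a1 a2. F a1 a2 b)) = sw H x (\<lambda>a b. sw H b (\<lambda>b1 b2. F a b1 b2))"
proof -
  have ca: "\<And>a b c. comul_left H (hcomul H x) (a,b,c) = comul_right H (hcomul H x) (a,b,c)"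
    using hopf by (simp add: is_hopf_def)
  have "sw H x (\<lambda>a b. sw H a (\<lambda>a1 a2. F a1 a2 b)) =
     (\<Sum>p\<in>UNIV. \<Sum>c\<in>UNIV. \<Sum>a\<in>UNIV. \<Sum>b\<in>UNIV. hcomul H x (p,c) * hcomul H (ev p) (a,b) * F (ev a) (ev b) (ev c))"
    by (simp add: sw_def sum_pair sum_distrib_left mult.assoc)
  also have "\<dots> = (\<Sum>c\<in>UNIV. \<Sum>a\<in>UNIV. \<Sum>b\<in>UNIV. \<Sum>p\<in>UNIV. hcomul H x (p,c) * hcomul H (ev p) (a,b) * F (ev a) (ev b) (ev c))"
    by (rule sum_rot4)
  also have "\<dots> = (\<Sum>a\<in>UNIV. \<Sum>b\<in>UNIV. \<Sum>c\<in>UNIV. \<Sum>p\<in>UNIV. hcomul H x (p,c) * hcomul H (ev p) (a,b) * F (ev a) (ev b) (ev c))"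
    by (rule sum_rot3)
  also have "\<dots> = (\<Sum>a\<in>UNIV. \<Sum>b\<in>UNIV. \<Sum>c\<in>UNIV. comul_left H (hcomul H x) (a,b,c) * F (ev a) (ev b) (ev c))"
    by (simp add: comul_left_def sum_distrib_right)
  also have "\<dots> = (\<Sum>a\<in>UNIV. \<Sum>b\<in>UNIV. \<Sum>c\<in>UNIV. comul_right H (hcomul H x) (a,b,c) * F (ev a) (ev b) (ev c))"
    by (simp add: ca)
  also have "\<dots> = (\<Sum>a\<in>UNIV. \<Sum>b\<in>UNIV. \<Sum>c\<in>UNIV. \<Sum>q\<in>UNIV. hcomul H x (a,q) * hcomul H (ev q) (b,c) * F (ev a) (ev b) (ev c))"
    by (simp add: comul_right_def sum_distrib_right)
  also have "\<dots> = (\<Sum>a\<in>UNIV. \<Sum>q\<in>UNIV. \<Sum>b\<in>UNIV. \<Sum>c\<in>UNIV. hcomul H x (a,q) * hcomul H (ev q) (b,c) * F (ev a) (ev b) (ev c))"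
    by (rule sum.cong[OF refl], rule sum_rot3[symmetric])
  also have "\<dots> = sw H x (\<lambda>a b. sw H b (\<lambda>b1 b2. F a b1 b2))"
    by (simp add: sw_def sum_pair sum_distrib_left mult.assoc)
  finally show ?thesis .
qed

lemma sw_counit_l: assumes "islin G" shows "sw H x (\<lambda>a b. hcounit H a * G b) = G x"
proof -
  have ax: "\<And>l. (\<Sum>j\<in>UNIV. hcounit H (ev j) * hcomul H x (j, l)) = x l"
    using hopf unfolding is_hopf_def by (metis (no_types, lifting))
  have "sw H x (\<lambda>a b. hcounit H a * G b) = (\<Sum>j\<in>UNIV. \<Sum>l\<in>UNIV. hcomul H x (j,l) * (hcounit H (ev j) * G (ev l)))"
    by (simp add: sw_def sum_pair)
  also have "\<dots> = (\<Sum>l\<in>UNIV. \<Sum>j\<in>UNIV. hcomul H x (j,l) * (hcounit H (ev j) * G (ev l)))"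
    by (rule sum.swap)
  also have "\<dots> = (\<Sum>l\<in>UNIV. (\<Sum>j\<in>UNIV. hcounit H (ev j) * hcomul H x (j, l)) * G (ev l))"
    by (simp add: sum_distrib_right sum_distrib_left mult_ac)
  also have "\<dots> = (\<Sum>l\<in>UNIV. x l * G (ev l))" by (simp add: ax)
  also have "\<dots> = G x" by (rule islin_expand[OF assms, symmetric])
  finally show ?thesis .
qed

lemma sw_counit_r: assumes "islin G" shows "sw H x (\<lambda>a b. G a * hcounit H b) = G x"
proof -
  have ax: "\<And>j. (\<Sum>l\<in>UNIV. hcomul H x (j, l) * hcounit H (ev l)) = x j"
    using hopf unfolding is_hopf_def by (metis (no_types, lifting))
  have "sw H x (\<lambda>a b. G a * hcounit H b) = (\<Sum>j\<in>UNIV. (\<Sum>l\<in>UNIV. hcomul H x (j,l) * hcounit H (ev l)) * G (ev j))"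
    by (simp add: sw_def sum_pair sum_distrib_right sum_distrib_left mult_ac)
  also have "\<dots> = (\<Sum>j\<in>UNIV. x j * G (ev j))" by (simp add: ax)
  also have "\<dots> = G x" by (rule islin_expand[OF assms, symmetric])
  finally show ?thesis .
qed

lemma sw_anti_l: assumes "islin G" shows "sw H x (\<lambda>a b. G (hmul H (hanti H a) b)) = hcounit H x * G (hone H)"
proof -
  have ax: "(\<lambda>m. \<Sum>p\<in>UNIV. hcomul H x p * hmul H (hanti H (ev (fst p))) (ev (snd p)) m) = vscale (hcounit H x) (hone H)"
    using hopf unfolding is_hopf_def by blast
  have "(\<lambda>m. \<Sum>p\<in>UNIV. hcomul H x p * hmul H (hanti H (ev (fst p))) (ev (snd p)) m)
       = (\<Sum>p\<in>UNIV. vscale (hcomul H x p) (hmul H (hanti H (ev (fst p))) (ev (snd p))))"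
    by (rule ext) (simp add: sum_fun_app)
  then have "G (vscale (hcounit H x) (hone H)) = (\<Sum>p\<in>UNIV. hcomul H x p * G (hmul H (hanti H (ev (fst p))) (ev (snd p))))"
    using ax by (simp add: islin_sum[OF assms] islinD[OF assms])
  then show ?thesis by (simp add: sw_def islinD[OF assms])
qed

lemma sw_anti_r: assumes "islin G" shows "sw H x (\<lambda>a b. G (hmul H a (hanti H b))) = hcounit H x * G (hone H)"
proof -
  have ax: "(\<lambda>m. \<Sum>p\<in>UNIV. hcomul H x p * hmul H (ev (fst p)) (hanti H (ev (snd p))) m) = vscale (hcounit H x) (hone H)"
    using hopf unfolding is_hopf_def by blast
  have "(\<lambda>m. \<Sum>p\<in>UNIV. hcomul H x p * hmul H (ev (fst p)) (hanti H (ev (snd p))) m)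
       = (\<Sum>p\<in>UNIV. vscale (hcomul H x p) (hmul H (ev (fst p)) (hanti H (ev (snd p)))))"
    by (rule ext) (simp add: sum_fun_app)
  then have "G (vscale (hcounit H x) (hone H)) = (\<Sum>p\<in>UNIV. hcomul H x p * G (hmul H (ev (fst p)) (hanti H (ev (snd p)))))"
    using ax by (simp add: islin_sum[OF assms] islinD[OF assms])
  then show ?thesis by (simp add: sw_def islinD[OF assms])
qed

lemma sw_one: assumes "bilin F" shows "sw H (hone H) F = F (hone H) (hone H)"
proof -
  have ax: "hcomul H (hone H) = (\<lambda>(a, b). hone H a * hone H b)"
    using hopf unfolding is_hopf_def by blast
  have "sw H (hone H) F = (\<Sum>a\<in>UNIV. hone H a * (\<Sum>b\<in>UNIV. hone H b * F (ev a) (ev b)))"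
    by (simp add: sw_def ax sum_pair sum_distrib_left mult.assoc)
  also have "\<dots> = (\<Sum>a\<in>UNIV. hone H a * F (ev a) (hone H))"
    by (simp add: bilin_expand2[OF assms, of _ "hone H"])
  also have "\<dots> = F (hone H) (hone H)"
    by (simp add: bilin_expand1[OF assms, of "hone H"])
  finally show ?thesis .
qed

lemma sw_mult: assumes "bilin F"
  shows "sw H (hmul H x y) F = sw H x (\<lambda>a b. sw H y (\<lambda>c d. F (hmul H a c) (hmul H b d)))"
proof -
  have ax: "hcomul H (hmul H x y) = hmul2 H (hcomul H x) (hcomul H y)"
    using hopf unfolding is_hopf_def by blast
  have e: "\<And>a b c d. F (hmul H (ev a) (ev c)) (hmul H (ev b) (ev d)) =
      (\<Sum>l1\<in>UNIV. \<Sum>l2\<in>UNIV. hm H a c l1 * hm H b d l2 * F (ev l1) (ev l2))"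
  proof -
    fix a b c d
    have "F (hmul H (ev a) (ev c)) (hmul H (ev b) (ev d)) = (\<Sum>l1\<in>UNIV. hm H a c l1 * F (ev l1) (hmul H (ev b) (ev d)))"
      by (subst bilin_expand1[OF assms]) (simp add: ev_mul)
    also have "\<dots> = (\<Sum>l1\<in>UNIV. hm H a c l1 * (\<Sum>l2\<in>UNIV. hm H b d l2 * F (ev l1) (ev l2)))"
      by (rule sum.cong[OF refl], subst bilin_expand2[OF assms]) (simp add: ev_mul)
    finally show "F (hmul H (ev a) (ev c)) (hmul H (ev b) (ev d)) =
      (\<Sum>l1\<in>UNIV. \<Sum>l2\<in>UNIV. hm H a c l1 * hm H b d l2 * F (ev l1) (ev l2))"
      by (simp add: sum_distrib_left mult.assoc)
  qed
  have "sw H x (\<lambda>a b. sw H y (\<lambda>c d. F (hmul H a c) (hmul H b d))) =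
     (\<Sum>p\<in>UNIV. \<Sum>q\<in>UNIV. \<Sum>l1\<in>UNIV. \<Sum>l2\<in>UNIV. hcomul H x p * hcomul H y q * (hm H (fst p) (fst q) l1 * hm H (snd p) (snd q) l2) * F (ev l1) (ev l2))"
    by (simp add: sw_def e sum_distrib_left mult.assoc)
  also have "\<dots> = (\<Sum>q\<in>UNIV. \<Sum>l1\<in>UNIV. \<Sum>l2\<in>UNIV. \<Sum>p\<in>UNIV. hcomul H x p * hcomul H y q * (hm H (fst p) (fst q) l1 * hm H (snd p) (snd q) l2) * F (ev l1) (ev l2))"
    by (rule sum_rot4)
  also have "\<dots> = (\<Sum>l1\<in>UNIV. \<Sum>l2\<in>UNIV. \<Sum>p\<in>UNIV. \<Sum>q\<in>UNIV. hcomul H x p * hcomul H y q * (hm H (fst p) (fst q) l1 * hm H (snd p) (snd q) l2) * F (ev l1) (ev l2))"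
    by (rule sum_rot4)
  also have "\<dots> = sw H (hmul H x y) F"
    by (simp add: sw_def ax sum_pair hmul2_def sum_distrib_right mult.assoc)
  finally show ?thesis by simp
qed

end


lemma bilinI: assumes "\<And>x y b. F (x + y) b = F x b + F y b" "\<And>c x b. F (vscale c x) b = c * F x b"
  "\<And>x y a. F a (x + y) = F a x + F a y" "\<And>c x a. F a (vscale c x) = c * F a x"
  shows "bilin F"
  using assms by (simp add: bilin_def islin_def)

lemma bilin_coord: "bilin (\<lambda>a b. a i * b j)"
  by (rule bilinI) (simp_all add: algebra_simps)

context
  fixes A :: "('a::finite, 'k::field) hopf_data" and H :: "('h::finite, 'k) hopf_data"
    and P :: "'a \<Rightarrow> 'h \<Rightarrow> 'k"
  assumes hmap: "is_hopf_map A H P"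
begin

lemma hmap_mul: "lin P (hmul A x y) = hmul H (lin P x) (lin P y)"
  using hmap by (simp add: is_hopf_map_def)
lemma hmap_one: "lin P (hone A) = hone H"
  using hmap by (simp add: is_hopf_map_def)
lemma hmap_counit: "hcounit H (lin P x) = hcounit A x"
  using hmap by (simp add: is_hopf_map_def)

lemma sw_hmap: assumes "bilin F"
  shows "sw H (lin P x) F = sw A x (\<lambda>a b. F (lin P a) (lin P b))"
proof -
  have ax: "hcomul H (lin P x) = lin2 P (hcomul A x)"
    using hmap by (simp add: is_hopf_map_def)
  have e: "\<And>i j. F (lin P (ev i)) (lin P (ev j)) = (\<Sum>a\<in>UNIV. \<Sum>b\<in>UNIV. P i a * P j b * F (ev a) (ev b))"
  proof -
    fix i j
    have "F (lin P (ev i)) (lin P (ev j)) = (\<Sum>a\<in>UNIV. P i a * F (ev a) (lin P (ev j)))"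
      by (subst bilin_expand1[OF assms]) (simp add: ev_lin)
    also have "\<dots> = (\<Sum>a\<in>UNIV. P i a * (\<Sum>b\<in>UNIV. P j b * F (ev a) (ev b)))"
      by (rule sum.cong[OF refl], subst bilin_expand2[OF assms]) (simp add: ev_lin)
    finally show "F (lin P (ev i)) (lin P (ev j)) = (\<Sum>a\<in>UNIV. \<Sum>b\<in>UNIV. P i a * P j b * F (ev a) (ev b))"
      by (simp add: sum_distrib_left mult.assoc)
  qed
  have "sw A x (\<lambda>a b. F (lin P a) (lin P b)) = (\<Sum>p\<in>UNIV. \<Sum>a\<in>UNIV. \<Sum>b\<in>UNIV. hcomul A x p * (P (fst p) a * P (snd p) b) * F (ev a) (ev b))"
    by (simp add: sw_def e sum_distrib_left mult.assoc)
  also have "\<dots> = (\<Sum>a\<in>UNIV. \<Sum>b\<in>UNIV. \<Sum>p\<in>UNIV. hcomul A x p * (P (fst p) a * P (snd p) b) * F (ev a) (ev b))"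
    by (rule sum_rot3)
  also have "\<dots> = sw H (lin P x) F"
    by (simp add: sw_def ax sum_pair lin2_def sum_distrib_right mult.assoc)
  finally show ?thesis by simp
qed

end

lemma coinv_sw: assumes "r \<in> coinv A H P" "bilin F"
  shows "sw A r (\<lambda>a b. F a (lin P b)) = F r (hone H)"
proof -
  have ax: "\<And>i b. (\<Sum>l\<in>UNIV. hcomul A r (i, l) * P l b) = r i * hone H b"
  proof -
    fix i b
    from assms(1) have "(\<lambda>(i, b). \<Sum>l\<in>UNIV. hcomul A r (i, l) * P l b) = (\<lambda>(i, b). r i * hone H b)"
      by (simp add: coinv_def)
    from fun_cong[OF this, of "(i,b)"] show "(\<Sum>l\<in>UNIV. hcomul A r (i, l) * P l b) = r i * hone H b" by simp
  qed
  have e: "\<And>i l. F (ev i) (lin P (ev l)) = (\<Sum>b\<in>UNIV. P l b * F (ev i) (ev b))"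
    by (subst bilin_expand2[OF assms(2)]) (simp add: ev_lin)
  have "sw A r (\<lambda>a b. F a (lin P b)) = (\<Sum>i\<in>UNIV. \<Sum>l\<in>UNIV. \<Sum>b\<in>UNIV. hcomul A r (i,l) * P l b * F (ev i) (ev b))"
    by (simp add: sw_def sum_pair e sum_distrib_left mult.assoc)
  also have "\<dots> = (\<Sum>i\<in>UNIV. \<Sum>b\<in>UNIV. \<Sum>l\<in>UNIV. hcomul A r (i,l) * P l b * F (ev i) (ev b))"
    by (rule sum.cong[OF refl], rule sum.swap)
  also have "\<dots> = (\<Sum>i\<in>UNIV. \<Sum>b\<in>UNIV. r i * hone H b * F (ev i) (ev b))"
    by (simp add: sum_distrib_right[symmetric] ax)
  also have "\<dots> = (\<Sum>i\<in>UNIV. r i * F (ev i) (hone H))"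
    by (rule sum.cong[OF refl]) (simp add: bilin_expand2[OF assms(2), of _ "hone H"] sum_distrib_left mult.assoc)
  also have "\<dots> = F r (hone H)"
    by (rule bilin_expand1[OF assms(2), symmetric])
  finally show ?thesis .
qed

lemma coinvI: assumes "\<And>F. bilin F \<Longrightarrow> sw A r (\<lambda>a b. F a (lin P b)) = F r (hone H)"
  shows "r \<in> coinv A H P"
proof -
  have "\<And>i b. (\<Sum>l\<in>UNIV. hcomul A r (i, l) * P l b) = r i * hone H b"
  proof -
    fix i b
    have "sw A r (\<lambda>u v. u i * lin P v b) = r i * hone H b"
      using assms[OF bilin_coord[of i b]] by simp
    moreover have "sw A r (\<lambda>u v. u i * lin P v b) = (\<Sum>l\<in>UNIV. hcomul A r (i, l) * P l b)"
      by (simp add: sw_def sum_pair ev_lin del: sum_ev_left' sum_ev_right') (simp add: ev_def if01_mult sum_if_out sum.delta)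
    ultimately show "(\<Sum>l\<in>UNIV. hcomul A r (i, l) * P l b) = r i * hone H b" by simp
  qed
  then show ?thesis by (auto simp: coinv_def)
qed




lemma sw_swap: "sw H x (\<lambda>a b. sw H' y (\<lambda>c d. K a b c d)) = sw H' y (\<lambda>c d. sw H x (\<lambda>a b. K a b c d))"
  unfolding sw_def by (simp add: sum_distrib_left sum_distrib_right mult_ac) (rule sum.swap)

context
  fixes H :: "('i::finite, 'k::field) hopf_data"
  assumes hopf: "is_hopf H"
begin

abbreviation "mul \<equiv> hmul H"
abbreviation "S \<equiv> hanti H"
abbreviation "eps \<equiv> hcounit H"
abbreviation "one \<equiv> hone H"

lemma test_abbrev: "mul (mul x y) z = mul x (mul y z)"
  by (rule assoc[OF hopf])

lemma anti_one: "S one = one"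
proof -
  have "\<And>z. (S one) z = one z"
  proof -
    fix z
    have bl: "bilin (\<lambda>a b. mul (S a) b z)"
      by (rule bilinI) simp_all
    have "sw H one (\<lambda>a b. (\<lambda>w. w z) (mul (S a) b)) = eps one * one z"
      by (rule sw_anti_l[OF hopf]) (rule islin_coord)
    moreover have "sw H one (\<lambda>a b. mul (S a) b z) = mul (S one) one z"
      by (rule sw_one[OF hopf bl])
    ultimately show "(S one) z = one z" using one_right[OF hopf] counit_one[OF hopf] by simp
  qed
  then show ?thesis by (rule ext)
qed

lemma counit_anti: "eps (S x) = eps x"
proof -
  have l1: "islin (\<lambda>a. eps (S a))" by (simp add: islin_def)
  have l2: "islin eps" by (simp add: islin_def)
  have "eps (S x) = sw H x (\<lambda>a b. eps (S a) * eps b)"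
    by (rule sw_counit_r[OF hopf l1, symmetric])
  also have "\<dots> = sw H x (\<lambda>a b. eps (mul (S a) b))"
    by (simp add: counit_mult[OF hopf])
  also have "\<dots> = eps x * eps one"
    by (rule sw_anti_l[OF hopf l2])
  finally show ?thesis by (simp add: counit_one[OF hopf])
qed

lemmas A = assoc[OF hopf]

lemma sw_counit_r2: "islin G \<Longrightarrow> sw H x (\<lambda>a b. eps b * G a) = G x"
  using sw_counit_r[OF hopf, of G x] by (simp add: mult.commute)
lemma sw_counit_l2: "islin G \<Longrightarrow> sw H x (\<lambda>a b. eps a * G b) = G x"
  by (rule sw_counit_l[OF hopf])

lemma anti_mult_G: assumes G: "islin G" shows "G (S (mul x y)) = G (mul (S y) (S x))"
proof -
  let ?K = "\<lambda>x1 x2 x3 y1 y2 y3. G (mul (mul (mul (S (mul x1 y1)) (mul x2 y2)) (S y3)) (S x3))"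
  let ?E = "sw H x (\<lambda>x1 x'. sw H x' (\<lambda>x2 x3. sw H y (\<lambda>y1 y'. sw H y' (\<lambda>y2 y3. ?K x1 x2 x3 y1 y2 y3))))"
  have w1a: "\<And>x1 x2 x3 y1 y'. sw H y' (\<lambda>y2 y3. ?K x1 x2 x3 y1 y2 y3) = eps y' * G (mul (mul (S (mul x1 y1)) x2) (S x3))"
  proof -
    fix x1 x2 x3 y1 y'
    have "sw H y' (\<lambda>y2 y3. ?K x1 x2 x3 y1 y2 y3) = sw H y' (\<lambda>y2 y3. (\<lambda>w. G (mul (mul (S (mul x1 y1)) (mul x2 w)) (S x3))) (mul y2 (S y3)))"
      by (rule sw_cong) (simp add: A)
    also have "\<dots> = eps y' * G (mul (mul (S (mul x1 y1)) (mul x2 one)) (S x3))"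
      by (rule sw_anti_r[OF hopf]) (simp add: islin_def islinD[OF G])
    finally show "sw H y' (\<lambda>y2 y3. ?K x1 x2 x3 y1 y2 y3) = eps y' * G (mul (mul (S (mul x1 y1)) x2) (S x3))"
      by (simp add: one_right[OF hopf])
  qed
  have w1b: "\<And>x1 x2 x3. sw H y (\<lambda>y1 y'. eps y' * G (mul (mul (S (mul x1 y1)) x2) (S x3))) = G (mul (mul (S (mul x1 y)) x2) (S x3))"
    by (rule sw_counit_r2) (simp add: islin_def islinD[OF G])
  have w1c: "\<And>x1 x'. sw H x' (\<lambda>x2 x3. G (mul (mul (S (mul x1 y)) x2) (S x3))) = eps x' * G (S (mul x1 y))"
  proof -
    fix x1 x'
    have "sw H x' (\<lambda>x2 x3. G (mul (mul (S (mul x1 y)) x2) (S x3))) = sw H x' (\<lambda>x2 x3. (\<lambda>w. G (mul (S (mul x1 y)) w)) (mul x2 (S x3)))"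
      by (rule sw_cong) (simp add: A)
    also have "\<dots> = eps x' * G (mul (S (mul x1 y)) one)"
      by (rule sw_anti_r[OF hopf]) (simp add: islin_def islinD[OF G])
    finally show "sw H x' (\<lambda>x2 x3. G (mul (mul (S (mul x1 y)) x2) (S x3))) = eps x' * G (S (mul x1 y))"
      by (simp add: one_right[OF hopf])
  qed
  have way1: "?E = G (S (mul x y))"
  proof -
    have "?E = sw H x (\<lambda>x1 x'. eps x' * G (S (mul x1 y)))"
      by (simp add: w1a w1b w1c)
    also have "\<dots> = G (S (mul x y))"
      by (rule sw_counit_r2) (simp add: islin_def islinD[OF G])
    finally show ?thesis .
  qed
  have e1: "?E = sw H x (\<lambda>x12 x3. sw H x12 (\<lambda>x1 x2. sw H y (\<lambda>y1 y'. sw H y' (\<lambda>y2 y3. ?K x1 x2 x3 y1 y2 y3))))"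
    by (rule sw_coassoc[OF hopf, symmetric])
  also have e2: "\<dots> = sw H x (\<lambda>x12 x3. sw H x12 (\<lambda>x1 x2. sw H y (\<lambda>y12 y3. sw H y12 (\<lambda>y1 y2. ?K x1 x2 x3 y1 y2 y3))))"
    by (simp only: sw_coassoc[OF hopf, symmetric])
  also have e3: "\<dots> = sw H x (\<lambda>x12 x3. sw H y (\<lambda>y12 y3. sw H x12 (\<lambda>x1 x2. sw H y12 (\<lambda>y1 y2. ?K x1 x2 x3 y1 y2 y3))))"
    by (rule sw_cong, rule sw_swap)
  also have e4: "\<dots> = sw H x (\<lambda>x12 x3. sw H y (\<lambda>y12 y3. sw H (mul x12 y12) (\<lambda>u v. G (mul (mul (mul (S u) v) (S y3)) (S x3)))))"
  proof -
    have "\<And>x12 y12 x3 y3. sw H x12 (\<lambda>x1 x2. sw H y12 (\<lambda>y1 y2. ?K x1 x2 x3 y1 y2 y3)) = sw H (mul x12 y12) (\<lambda>u v. G (mul (mul (mul (S u) v) (S y3)) (S x3)))"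
      by (rule sw_mult[OF hopf, symmetric]) (rule bilinI, simp_all add: islinD[OF G])
    then show ?thesis by simp
  qed
  also have e5: "\<dots> = sw H x (\<lambda>x12 x3. sw H y (\<lambda>y12 y3. eps x12 * (eps y12 * G (mul (S y3) (S x3)))))"
  proof -
    have "\<And>x12 y12 x3 y3. sw H (mul x12 y12) (\<lambda>u v. (\<lambda>w. G (mul (mul w (S y3)) (S x3))) (mul (S u) v)) = eps (mul x12 y12) * G (mul (mul one (S y3)) (S x3))"
      by (rule sw_anti_l[OF hopf]) (simp add: islin_def islinD[OF G])
    then show ?thesis by (simp add: counit_mult[OF hopf] one_left[OF hopf] mult.assoc)
  qed
  also have e6: "\<dots> = G (mul (S y) (S x))"
  proof -
    have "\<And>x3. sw H y (\<lambda>y12 y3. eps y12 * G (mul (S y3) (S x3))) = G (mul (S y) (S x3))"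
      by (rule sw_counit_l2) (simp add: islin_def islinD[OF G])
    moreover have "sw H x (\<lambda>x12 x3. eps x12 * G (mul (S y) (S x3))) = G (mul (S y) (S x))"
      by (rule sw_counit_l2) (simp add: islin_def islinD[OF G])
    ultimately show ?thesis by (simp add: sw_cmult)
  qed
  finally show ?thesis using way1 by simp
qed

lemma anti_mult: "S (mul x y) = mul (S y) (S x)"
  by (rule ext) (rule anti_mult_G[OF islin_coord])

lemma anti_comult: assumes F: "bilin F" shows "sw H (S x) F = sw H x (\<lambda>a b. F (S b) (S a))"
proof -
  let ?O = "\<lambda>u v c d x3. sw H (S x3) (\<lambda>e f. F (mul (mul (S v) c) e) (mul (mul (S u) d) f))"
  let ?T = "sw H x (\<lambda>x1 x'. sw H x1 (\<lambda>u v. sw H x' (\<lambda>x2 x3. sw H x2 (\<lambda>c d. ?O u v c d x3))))"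
  note FD = bilinD[OF F]
  have way1: "?T = sw H x (\<lambda>a b. F (S b) (S a))"
  proof -
    have w1: "\<And>u v x2 x3. sw H x2 (\<lambda>c d. ?O u v c d x3) = sw H (mul x2 (S x3)) (\<lambda>w w'. F (mul (S v) w) (mul (S u) w'))"
    proof -
      fix u v x2 x3
      have "sw H x2 (\<lambda>c d. ?O u v c d x3) = sw H x2 (\<lambda>c d. sw H (S x3) (\<lambda>e f. (\<lambda>w w'. F (mul (S v) w) (mul (S u) w')) (mul c e) (mul d f)))"
        by (simp add: A)
      also have "\<dots> = sw H (mul x2 (S x3)) (\<lambda>w w'. F (mul (S v) w) (mul (S u) w'))"
        by (rule sw_mult[OF hopf, symmetric]) (rule bilinI, simp_all add: FD)
      finally show "sw H x2 (\<lambda>c d. ?O u v c d x3) = sw H (mul x2 (S x3)) (\<lambda>w w'. F (mul (S v) w) (mul (S u) w'))" .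
    qed
    have w2: "\<And>u v x'. sw H x' (\<lambda>x2 x3. sw H (mul x2 (S x3)) (\<lambda>w w'. F (mul (S v) w) (mul (S u) w'))) = eps x' * F (S v) (S u)"
    proof -
      fix u v x'
      have "sw H x' (\<lambda>x2 x3. (\<lambda>z. sw H z (\<lambda>w w'. F (mul (S v) w) (mul (S u) w'))) (mul x2 (S x3))) = eps x' * sw H one (\<lambda>w w'. F (mul (S v) w) (mul (S u) w'))"
        by (rule sw_anti_r[OF hopf]) (rule islin_sw)
      also have "sw H one (\<lambda>w w'. F (mul (S v) w) (mul (S u) w')) = F (mul (S v) one) (mul (S u) one)"
        by (rule sw_one[OF hopf]) (rule bilinI, simp_all add: FD)
      finally show "sw H x' (\<lambda>x2 x3. sw H (mul x2 (S x3)) (\<lambda>w w'. F (mul (S v) w) (mul (S u) w'))) = eps x' * F (S v) (S u)"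
        by (simp add: one_right[OF hopf])
    qed
    have "?T = sw H x (\<lambda>x1 x'. sw H x1 (\<lambda>u v. eps x' * F (S v) (S u)))"
      by (simp only: w1 w2)
    also have "\<dots> = sw H x (\<lambda>x1 x'. eps x' * sw H x1 (\<lambda>u v. F (S v) (S u)))"
      by (simp only: sw_cmult)
    also have "\<dots> = sw H x (\<lambda>a b. F (S b) (S a))"
      by (rule sw_counit_r2) (rule islin_sw)
    finally show ?thesis .
  qed
  have "?T = sw H x (\<lambda>x1 x'. sw H x' (\<lambda>x2 x3. sw H x1 (\<lambda>u v. sw H x2 (\<lambda>c d. ?O u v c d x3))))"
    by (rule sw_cong, rule sw_swap)
  also have "\<dots> = sw H x (\<lambda>x12 x3. sw H x12 (\<lambda>x1 x2. sw H x1 (\<lambda>u v. sw H x2 (\<lambda>c d. ?O u v c d x3))))"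
    by (rule sw_coassoc[OF hopf, symmetric])
  also have "\<dots> = sw H x (\<lambda>x12 x3. sw H x12 (\<lambda>u b. sw H b (\<lambda>v x2. sw H x2 (\<lambda>c d. ?O u v c d x3))))"
    by (rule sw_cong, rule sw_coassoc[OF hopf])
  also have "\<dots> = sw H x (\<lambda>x12 x3. sw H x12 (\<lambda>u b. sw H b (\<lambda>vc d. sw H vc (\<lambda>v c. ?O u v c d x3))))"
    by (rule sw_cong, rule sw_cong, rule sw_coassoc[OF hopf, symmetric])
  also have "\<dots> = sw H x (\<lambda>x12 x3. sw H x12 (\<lambda>u b. sw H b (\<lambda>vc d. eps vc * sw H (S x3) (\<lambda>e f. F e (mul (mul (S u) d) f)))))"
  proof -
    have "\<And>u d vc x3. sw H vc (\<lambda>v c. (\<lambda>w. sw H (S x3) (\<lambda>e f. F (mul w e) (mul (mul (S u) d) f))) (mul (S v) c))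
        = eps vc * sw H (S x3) (\<lambda>e f. F (mul one e) (mul (mul (S u) d) f))"
      by (rule sw_anti_l[OF hopf]) (simp add: islin_def FD sw_plus_fun sw_cmult)
    then show ?thesis by (simp add: one_left[OF hopf])
  qed
  also have "\<dots> = sw H x (\<lambda>x12 x3. sw H x12 (\<lambda>u b. sw H (S x3) (\<lambda>e f. F e (mul (mul (S u) b) f))))"
  proof -
    have "\<And>u b x3. sw H b (\<lambda>vc d. eps vc * sw H (S x3) (\<lambda>e f. F e (mul (mul (S u) d) f))) = sw H (S x3) (\<lambda>e f. F e (mul (mul (S u) b) f))"
      by (rule sw_counit_l2) (simp add: islin_def FD sw_plus_fun sw_cmult)
    then show ?thesis by simp
  qed
  also have "\<dots> = sw H x (\<lambda>x12 x3. eps x12 * sw H (S x3) F)"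
  proof -
    have "\<And>x12 x3. sw H x12 (\<lambda>u b. (\<lambda>w. sw H (S x3) (\<lambda>e f. F e (mul w f))) (mul (S u) b)) = eps x12 * sw H (S x3) (\<lambda>e f. F e (mul one f))"
      by (rule sw_anti_l[OF hopf]) (simp add: islin_def FD sw_plus_fun sw_cmult)
    then show ?thesis by (simp add: one_left[OF hopf])
  qed
  also have "\<dots> = sw H (S x) F"
    by (rule sw_counit_l2) (simp add: islin_def)
  finally show ?thesis using way1 by simp
qed

end




lemma vs_fun: "vector_space (vscale :: 'k::field \<Rightarrow> ('i \<Rightarrow> 'k) \<Rightarrow> ('i \<Rightarrow> 'k))"
  by unfold_locales (auto simp: vscale_def fun_eq_iff algebra_simps)

lemma ev_inj: "inj (ev :: 'i \<Rightarrow> 'i \<Rightarrow> 'k::field)"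
proof (rule injI)
  fix i j assume "ev i = (ev j :: 'i \<Rightarrow> 'k)"
  then have "ev i i = (ev j i :: 'k)" by simp
  then show "i = j" by (auto simp: ev_def split: if_splits)
qed

lemma fdvs_fun: "finite_dimensional_vector_space (vscale :: 'k::field \<Rightarrow> ('i::finite \<Rightarrow> 'k) \<Rightarrow> ('i \<Rightarrow> 'k)) (range ev)"
proof -
  interpret vector_space "vscale :: 'k::field \<Rightarrow> ('i::finite \<Rightarrow> 'k) \<Rightarrow> ('i \<Rightarrow> 'k)" by (rule vs_fun)
  show ?thesis
  proof
    show "finite (range (ev :: 'i \<Rightarrow> 'i \<Rightarrow> 'k))" by simp
    show "independent (range (ev :: 'i \<Rightarrow> 'i \<Rightarrow> 'k))"
      unfolding independent_explicit_module
    proof (intro allI impI)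
      fix t u v assume t: "finite t" "t \<subseteq> range (ev :: 'i \<Rightarrow> 'i \<Rightarrow> 'k)" "(\<Sum>v\<in>t. vscale (u v) v) = 0" "v \<in> t"
      then obtain i where vi: "v = ev i" by auto
      have "(\<Sum>w\<in>t. vscale (u w) w) i = 0" using t(3) by simp
      then have "(\<Sum>w\<in>t. u w * w i) = 0" by (simp add: sum_fun_app)
      moreover have "(\<Sum>w\<in>t. u w * w i) = u v * v i"
      proof (rule sum.remove[OF t(1) t(4), THEN trans])
        have "\<And>w. w \<in> t - {v} \<Longrightarrow> u w * w i = 0"
        proof -
          fix w assume w: "w \<in> t - {v}"
          then obtain j where wj: "w = ev j" using t(2) by auto
          with w vi have "j \<noteq> i" by auto
          then show "u w * w i = 0" by (simp add: wj ev_def)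
        qed
        then show "u v * v i + (\<Sum>w\<in>t - {v}. u w * w i) = u v * v i" by (simp add: sum.neutral)
      qed
      ultimately show "u v = 0" by (simp add: vi ev_def)
    qed
    show "span (range (ev :: 'i \<Rightarrow> 'i \<Rightarrow> 'k)) = UNIV"
    proof (rule set_eqI, rule iffI)
      fix x :: "'i \<Rightarrow> 'k"
      have "x = (\<Sum>i\<in>UNIV. vscale (x i) (ev i))" by (rule vec_decomp)
      also have "\<dots> \<in> span (range ev)"
        by (rule span_sum) (rule span_scale, rule span_base, simp)
      finally show "x \<in> span (range ev)" .
    qed simp
  qed
qed

lemma lin_inj_surj:
  fixes f :: "('i::finite \<Rightarrow> 'k::field) \<Rightarrow> ('i \<Rightarrow> 'k)"
  assumes "\<And>x y. f (x + y) = f x + f y" "\<And>c x. f (vscale c x) = vscale c (f x)" "inj f"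
  shows "surj f"
proof -
  interpret finite_dimensional_vector_space "vscale :: 'k::field \<Rightarrow> ('i::finite \<Rightarrow> 'k) \<Rightarrow> ('i \<Rightarrow> 'k)" "range ev"
    by (rule fdvs_fun)
  have "Vector_Spaces.linear vscale vscale f"
    unfolding linear_iff using vs_fun by (simp add: assms)
  then show ?thesis using linear_inj_imp_surj assms(3) by blast
qed

lemma lin_surj_inj:
  fixes f :: "('i::finite \<Rightarrow> 'k::field) \<Rightarrow> ('i \<Rightarrow> 'k)"
  assumes "\<And>x y. f (x + y) = f x + f y" "\<And>c x. f (vscale c x) = vscale c (f x)" "surj f"
  shows "inj f"
proof -
  interpret finite_dimensional_vector_space "vscale :: 'k::field \<Rightarrow> ('i::finite \<Rightarrow> 'k) \<Rightarrow> ('i \<Rightarrow> 'k)" "range ev"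
    by (rule fdvs_fun)
  have "Vector_Spaces.linear vscale vscale f"
    unfolding linear_iff using vs_fun by (simp add: assms)
  then show ?thesis using linear_surj_imp_inj assms(3) by blast
qed




lemma bilinD_fun: fixes F :: "('i::finite \<Rightarrow> 'k::field) \<Rightarrow> ('i \<Rightarrow> 'k) \<Rightarrow> 'k" assumes "bilin F"
  shows "F (x + y) = (\<lambda>b. F x b + F y b)" "F (vscale c x) = (\<lambda>b. c * F x b)"
  using bilinD[OF assms] by auto

lemma fapp_add_fun: "fapp (\<phi> + \<psi>) w = fapp \<phi> w + fapp \<psi> w"
  by (simp add: fapp_def sum.distrib algebra_simps)
lemma fapp_scale_fun: "fapp (vscale c \<phi>) w = c * fapp \<phi> w"
  by (simp add: fapp_def sum_distrib_left algebra_simps)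

lemma fapp_add'[simp]: "fapp \<phi> (\<lambda>a. x a + y a) = fapp \<phi> x + fapp \<phi> y"
  by (simp add: fapp_def sum.distrib algebra_simps)
lemma fapp_scale'[simp]: "fapp \<phi> (\<lambda>a. c * x a) = c * fapp \<phi> x"
  by (simp add: fapp_def sum_distrib_left algebra_simps)

definition psi :: "('i::finite, 'k::field) hopf_data \<Rightarrow> ('i \<Rightarrow> 'k) \<Rightarrow> ('i \<Rightarrow> 'k) \<Rightarrow> ('i \<Rightarrow> 'k)" where
  "psi H t \<phi> = (\<lambda>z. sw H t (\<lambda>a b. fapp \<phi> (hanti H b) * a z))"

definition rmul :: "('i::finite, 'k::field) hopf_data \<Rightarrow> ('i \<Rightarrow> 'k) \<Rightarrow> ('i \<Rightarrow> 'k) \<Rightarrow> ('i \<Rightarrow> 'k)" where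
  "rmul H \<phi> b = (\<lambda>i. fapp \<phi> (hmul H (ev i) b))"

lemma fapp_rmul: "fapp (rmul H \<phi> b) w = fapp \<phi> (hmul H w b)"
proof -
  have "fapp \<phi> (hmul H w b) = (\<Sum>i\<in>UNIV. w i * fapp \<phi> (hmul H (ev i) b))"
    by (rule islin_expand) (simp add: islin_def)
  then show ?thesis by (simp add: rmul_def fapp_def mult.commute)
qed

lemma psi_add: "psi H t (\<phi> + \<psi>) = psi H t \<phi> + psi H t \<psi>"
  by (rule ext) (simp add: psi_def fapp_add_fun algebra_simps sw_plus_fun)
lemma psi_scale: "psi H t (vscale c \<phi>) = vscale c (psi H t \<phi>)"
  by (rule ext) (simp add: psi_def fapp_scale_fun mult.assoc sw_cmult)

lemma sw_psi: "sw H (psi H t \<chi>) G = sw H t (\<lambda>a c. fapp \<chi> (hanti H c) * sw H a G)"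
proof -
  have "sw H (psi H t \<chi>) G = (\<lambda>w. sw H w G) (\<lambda>z. sw H t (\<lambda>u v. vscale (fapp \<chi> (hanti H v)) u z))"
    by (simp add: psi_def)
  also have "\<dots> = sw H t (\<lambda>u v. sw H (vscale (fapp \<chi> (hanti H v)) u) G)"
    by (rule sw_vec) (rule islin_sw)
  finally show ?thesis by simp
qed

context
  fixes H :: "('i::finite, 'k::field) hopf_data" and t :: "'i \<Rightarrow> 'k"
  assumes hopf: "is_hopf H"
    and int: "\<And>a. hmul H a t = vscale (hcounit H a) t"
begin

lemmas A5 = assoc[OF hopf]

lemma T1L: assumes F: "bilin F"
  shows "sw H t (\<lambda>u v. F (mul H b u) (S H v)) = sw H t (\<lambda>u v. F u (mul H (S H v) b))"
proof -
  note FD = bilinD[OF F] bilinD_fun[OF F]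
  have "sw H t (\<lambda>u v. F u (mul H (S H v) b)) = sw H b (\<lambda>b1 b2. eps H b1 * sw H t (\<lambda>u v. F u (mul H (S H v) b2)))"
    by (rule sw_counit_l2[OF hopf, symmetric]) (simp add: islin_def FD sw_plus_fun sw_cmult)
  also have "\<dots> = sw H b (\<lambda>b1 b2. sw H (mul H b1 t) (\<lambda>u v. F u (mul H (S H v) b2)))"
    by (simp add: int)
  also have "\<dots> = sw H b (\<lambda>b1 b2. sw H b1 (\<lambda>c d. sw H t (\<lambda>u v. F (mul H c u) (mul H (S H (mul H d v)) b2))))"
  proof -
    have "\<And>b1 b2. sw H (mul H b1 t) (\<lambda>u v. F u (mul H (S H v) b2)) = sw H b1 (\<lambda>c d. sw H t (\<lambda>u v. F (mul H c u) (mul H (S H (mul H d v)) b2)))"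
      by (rule sw_mult[OF hopf]) (rule bilinI, simp_all add: FD)
    then show ?thesis by simp
  qed
  also have "\<dots> = sw H b (\<lambda>b1 b2. sw H b1 (\<lambda>c d. sw H t (\<lambda>u v. F (mul H c u) (mul H (S H v) (mul H (S H d) b2)))))"
    by (simp add: anti_mult[OF hopf] A5)
  also have "\<dots> = sw H b (\<lambda>c b'. sw H b' (\<lambda>d b2. sw H t (\<lambda>u v. F (mul H c u) (mul H (S H v) (mul H (S H d) b2)))))"
    by (rule sw_coassoc[OF hopf])
  also have "\<dots> = sw H b (\<lambda>c b'. eps H b' * sw H t (\<lambda>u v. F (mul H c u) (mul H (S H v) (one H))))"
  proof -
    have "\<And>c b'. sw H b' (\<lambda>d b2. (\<lambda>w. sw H t (\<lambda>u v. F (mul H c u) (mul H (S H v) w))) (mul H (S H d) b2)) = eps H b' * sw H t (\<lambda>u v. F (mul H c u) (mul H (S H v) (one H)))"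
      by (rule sw_anti_l[OF hopf]) (simp add: islin_def FD sw_plus_fun sw_cmult)
    then show ?thesis by simp
  qed
  also have "\<dots> = sw H t (\<lambda>u v. F (mul H b u) (S H v))"
    by (simp add: one_right[OF hopf]) (rule sw_counit_r2[OF hopf], simp add: islin_def FD sw_plus_fun sw_cmult)
  finally show ?thesis by simp
qed

lemma psi_rmul: "hmul H b (psi H t \<phi>) = psi H t (rmul H \<phi> b)"
proof (rule ext)
  fix z
  have "hmul H b (psi H t \<phi>) z = (\<lambda>w. hmul H b w z) (\<lambda>z. sw H t (\<lambda>u v. vscale (fapp \<phi> (S H v)) u z))"
    by (simp add: psi_def)
  also have "\<dots> = sw H t (\<lambda>u v. hmul H b (vscale (fapp \<phi> (S H v)) u) z)"
    by (rule sw_vec) (simp add: islin_def)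
  also have "\<dots> = sw H t (\<lambda>u v. (\<lambda>x y. fapp \<phi> y * x z) (hmul H b u) (S H v))"
    by (simp add: mult.commute)
  also have "\<dots> = sw H t (\<lambda>u v. (\<lambda>x y. fapp \<phi> y * x z) u (hmul H (S H v) b))"
    by (rule T1L) (rule bilinI, simp_all add: algebra_simps)
  also have "\<dots> = psi H t (rmul H \<phi> b) z"
    by (simp add: psi_def fapp_rmul)
  finally show "hmul H b (psi H t \<phi>) z = psi H t (rmul H \<phi> b) z" .
qed

lemma psi_key: "(\<Sum>i\<in>UNIV. sw H (psi H t (rmul H \<phi> (hmul H (ev i) b))) (\<lambda>u v. u z * S H (S H v) i)) = t z * fapp \<phi> b"
proof -
  let ?R = "sw H t (\<lambda>a c. sw H a (\<lambda>u v. u z * fapp \<phi> (hmul H (S H c) (hmul H (S H (S H v)) b))))"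
  have r1: "?R = t z * fapp \<phi> b"
  proof -
    have "?R = sw H t (\<lambda>u a'. sw H a' (\<lambda>v c. u z * fapp \<phi> (hmul H (S H c) (hmul H (S H (S H v)) b))))"
      by (rule sw_coassoc[OF hopf])
    also have "\<dots> = sw H t (\<lambda>u a'. sw H a' (\<lambda>v c. (\<lambda>w. u z * fapp \<phi> (hmul H (S H w) b)) (hmul H (S H v) c)))"
      by (simp add: anti_mult[OF hopf] A5)
    also have "\<dots> = sw H t (\<lambda>u a'. eps H a' * (u z * fapp \<phi> (hmul H (S H (one H)) b)))"
    proof -
      have "\<And>u a'. sw H a' (\<lambda>v c. (\<lambda>w. u z * fapp \<phi> (hmul H (S H w) b)) (hmul H (S H v) c)) = eps H a' * (u z * fapp \<phi> (hmul H (S H (one H)) b))"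
        by (rule sw_anti_l[OF hopf]) (simp add: islin_def algebra_simps)
      then show ?thesis by simp
    qed
    also have "\<dots> = t z * fapp \<phi> b"
      by (simp add: anti_one[OF hopf] one_left[OF hopf]) (rule sw_counit_r2[OF hopf], simp add: islin_def algebra_simps)
    finally show ?thesis .
  qed
  have r2: "?R = (\<Sum>i\<in>UNIV. sw H t (\<lambda>a c. sw H a (\<lambda>u v. (u z * S H (S H v) i) * fapp \<phi> (hmul H (S H c) (hmul H (ev i) b)))))"
  proof -
    have e: "\<And>c w. fapp \<phi> (hmul H (S H c) (hmul H w b)) = (\<Sum>i\<in>UNIV. w i * fapp \<phi> (hmul H (S H c) (hmul H (ev i) b)))"
      by (rule islin_expand) (simp add: islin_def)
    have "?R = sw H t (\<lambda>a c. sw H a (\<lambda>u v. \<Sum>i\<in>UNIV. (u z * S H (S H v) i) * fapp \<phi> (hmul H (S H c) (hmul H (ev i) b))))"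
    proof (rule sw_cong, rule sw_cong)
      fix a c u v
      show "u z * fapp \<phi> (hmul H (S H c) (hmul H (S H (S H v)) b)) = (\<Sum>i\<in>UNIV. (u z * S H (S H v) i) * fapp \<phi> (hmul H (S H c) (hmul H (ev i) b)))"
        by (subst e) (simp add: sum_distrib_left mult.assoc)
    qed
    also have "\<dots> = (\<Sum>i\<in>UNIV. sw H t (\<lambda>a c. sw H a (\<lambda>u v. (u z * S H (S H v) i) * fapp \<phi> (hmul H (S H c) (hmul H (ev i) b)))))"
      by (simp only: sw_sum_fun)
    finally show ?thesis .
  qed
  have r3: "\<And>i. sw H t (\<lambda>a c. sw H a (\<lambda>u v. (u z * S H (S H v) i) * fapp \<phi> (hmul H (S H c) (hmul H (ev i) b))))
     = sw H (psi H t (rmul H \<phi> (hmul H (ev i) b))) (\<lambda>u v. u z * S H (S H v) i)"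
    by (simp add: sw_psi fapp_rmul sw_cmult2 mult.commute)
  show ?thesis using r1 r2 r3 by simp
qed

lemma psi_inj: assumes tnz: "t \<noteq> 0" shows "inj (psi H t)"
proof -
  have "\<phi> = 0" if z: "psi H t \<phi> = 0" for \<phi>
  proof -
    have "\<And>b z. t z * fapp \<phi> b = 0"
    proof -
      fix b z
      have "\<And>c. psi H t (rmul H \<phi> c) = 0"
        using psi_rmul[of _ \<phi>, symmetric] z by simp
      then show "t z * fapp \<phi> b = 0" using psi_key[of \<phi> b z] by simp
    qed
    moreover obtain z where "t z \<noteq> 0" using tnz by (auto simp: fun_eq_iff)
    ultimately have "\<And>b. fapp \<phi> b = 0" by (metis mult_eq_0_iff)
    then show "\<phi> = 0" by (metis fapp_ev zero_fun_def ext)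
  qed
  then show ?thesis
    by (intro injI) (metis (no_types) diff_self eq_iff_diff_eq_0 psi_add psi_scale add_diff_cancel_right'
        diff_add_cancel)
qed

lemma LS_unique: assumes tnz: "t \<noteq> 0" and int': "\<And>a. hmul H a t' = vscale (hcounit H a) t'"
  shows "\<exists>c. t' = vscale c t"
proof -
  have "surj (psi H t)"
    by (rule lin_inj_surj) (simp_all add: psi_add psi_scale psi_inj[OF tnz])
  then obtain \<phi> where tp: "t' = psi H t \<phi>" by (metis surj_def)
  have "\<And>a. rmul H \<phi> a = vscale (eps H a) \<phi>"
  proof -
    fix a
    have "psi H t (rmul H \<phi> a) = psi H t (vscale (eps H a) \<phi>)"
      using psi_rmul[of a \<phi>] int'[of a] tp by (simp add: psi_scale)
    then show "rmul H \<phi> a = vscale (eps H a) \<phi>" using psi_inj[OF tnz] by (simp add: inj_eq)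
  qed
  then have fa: "\<And>w a. fapp \<phi> (hmul H w a) = eps H a * fapp \<phi> w"
    by (metis fapp_rmul fapp_scale_fun)
  define c where "c = fapp \<phi> (one H)"
  have fc: "\<And>a. fapp \<phi> a = eps H a * c"
  proof -
    fix a show "fapp \<phi> a = eps H a * c" using fa[of "one H" a] by (simp add: one_left[OF hopf] c_def)
  qed
  have "t' = vscale c t"
  proof (rule ext)
    fix z
    have "t' z = sw H t (\<lambda>a b. eps H b * (c * a z))"
      by (simp add: tp psi_def fc counit_anti[OF hopf] mult_ac)
    also have "\<dots> = c * t z"
      by (rule sw_counit_r2[OF hopf]) (simp add: islin_def algebra_simps)
    finally show "t' z = vscale c t z" by simp
  qed
  then show ?thesis by blast
qed

lemma T1R: assumes F: "bilin F"
  shows "sw H t (\<lambda>u v. F u (mul H a v)) = sw H t (\<lambda>u v. F (mul H (S H a) u) v)"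
proof -
  note FD = bilinD[OF F] bilinD_fun[OF F]
  have "sw H t (\<lambda>u v. F (mul H (S H a) u) v) = sw H a (\<lambda>a1 a2. eps H a2 * sw H t (\<lambda>u v. F (mul H (S H a1) u) v))"
    by (rule sw_counit_r2[OF hopf, symmetric]) (simp add: islin_def FD sw_plus_fun sw_cmult)
  also have "\<dots> = sw H a (\<lambda>a1 a2. sw H (mul H a2 t) (\<lambda>u v. F (mul H (S H a1) u) v))"
    by (simp add: int)
  also have "\<dots> = sw H a (\<lambda>a1 a2. sw H a2 (\<lambda>c d. sw H t (\<lambda>u v. F (mul H (S H a1) (mul H c u)) (mul H d v))))"
  proof -
    have "\<And>a1 a2. sw H (mul H a2 t) (\<lambda>u v. F (mul H (S H a1) u) v) = sw H a2 (\<lambda>c d. sw H t (\<lambda>u v. F (mul H (S H a1) (mul H c u)) (mul H d v)))"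
      by (rule sw_mult[OF hopf]) (rule bilinI, simp_all add: FD)
    then show ?thesis by simp
  qed
  also have "\<dots> = sw H a (\<lambda>a12 d. sw H a12 (\<lambda>a1 c. sw H t (\<lambda>u v. F (mul H (S H a1) (mul H c u)) (mul H d v))))"
    by (rule sw_coassoc[OF hopf, symmetric])
  also have "\<dots> = sw H a (\<lambda>a12 d. eps H a12 * sw H t (\<lambda>u v. F (mul H (one H) u) (mul H d v)))"
  proof -
    have "\<And>a12 d. sw H a12 (\<lambda>a1 c. (\<lambda>w. sw H t (\<lambda>u v. F (mul H w u) (mul H d v))) (mul H (S H a1) c)) = eps H a12 * sw H t (\<lambda>u v. F (mul H (one H) u) (mul H d v))"
      by (rule sw_anti_l[OF hopf]) (simp add: islin_def FD sw_plus_fun sw_cmult)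
    then show ?thesis by (simp add: A5)
  qed
  also have "\<dots> = sw H t (\<lambda>u v. F u (mul H a v))"
    by (simp add: one_left[OF hopf]) (rule sw_counit_l2[OF hopf], simp add: islin_def FD sw_plus_fun sw_cmult)
  finally show ?thesis by simp
qed

lemma anti_surj: assumes tnz: "t \<noteq> 0" shows "surj (S H)"
proof -
  define p2 where "p2 = (\<lambda>\<phi>. (\<lambda>z. sw H t (\<lambda>a b. fapp \<phi> b * a z)))"
  define p1 where "p1 = (\<lambda>\<phi>. (\<lambda>z. sw H t (\<lambda>a b. fapp \<phi> a * b z)))"
  have "surj (psi H t)"
    by (rule lin_inj_surj) (simp_all add: psi_add psi_scale psi_inj[OF tnz])
  have s2: "surj p2"
  proof -
    have "psi H t \<phi> = p2 (\<lambda>i. fapp \<phi> (S H (ev i)))" for \<phi>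
    proof -
      have fs: "\<And>b. fapp \<phi> (S H b) = fapp (\<lambda>i. fapp \<phi> (S H (ev i))) b"
      proof -
        fix b
        have "fapp \<phi> (S H b) = (\<Sum>i\<in>UNIV. b i * fapp \<phi> (S H (ev i)))"
          by (rule islin_expand) (simp add: islin_def)
        moreover have "fapp (\<lambda>i. fapp \<phi> (S H (ev i))) b = (\<Sum>i\<in>UNIV. b i * fapp \<phi> (S H (ev i)))"
          by (simp only: fapp_def[of "\<lambda>i. fapp \<phi> (S H (ev i))"]) (simp add: mult.commute)
        ultimately show "fapp \<phi> (S H b) = fapp (\<lambda>i. fapp \<phi> (S H (ev i))) b" by simp
      qed
      show ?thesis unfolding psi_def p2_def by (intro ext sw_cong) (metis fs)
    qed
    with \<open>surj (psi H t)\<close> show ?thesis by (metis surj_def)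
  qed
  have dual: "fapp \<phi> (p2 \<eta>) = fapp \<eta> (p1 \<phi>)" for \<phi> \<eta>
  proof -
    have "fapp \<phi> (p2 \<eta>) = sw H t (\<lambda>a b. fapp \<phi> (vscale (fapp \<eta> b) a))"
      unfolding p2_def using sw_vec[of "fapp \<phi>" H t "\<lambda>a b. vscale (fapp \<eta> b) a"] by (simp add: islin_def)
    moreover have "fapp \<eta> (p1 \<phi>) = sw H t (\<lambda>a b. fapp \<eta> (vscale (fapp \<phi> a) b))"
      unfolding p1_def using sw_vec[of "fapp \<eta>" H t "\<lambda>a b. vscale (fapp \<phi> a) b"] by (simp add: islin_def)
    ultimately show ?thesis by (simp add: mult.commute)
  qed
  have p1_add: "p1 (x + y) = p1 x + p1 y" for x y
    by (rule ext) (simp add: p1_def fapp_add_fun algebra_simps sw_plus_fun)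
  have p1_scale: "p1 (vscale c x) = vscale c (p1 x)" for c x
    by (rule ext) (simp add: p1_def fapp_scale_fun mult.assoc sw_cmult)
  have p1_inj: "inj p1"
  proof -
    have "\<phi> = 0" if z: "p1 \<phi> = 0" for \<phi>
    proof (rule ext)
      fix i
      obtain \<eta> where "ev i = p2 \<eta>" using s2 by (metis surj_def)
      then have "\<phi> i = fapp \<eta> (p1 \<phi>)" by (metis fapp_ev dual)
      also have "\<dots> = 0" using z by (simp add: fapp_def)
      finally show "\<phi> i = 0 i" by simp
    qed
    then show ?thesis
      by (intro injI) (metis (no_types) diff_self eq_iff_diff_eq_0 p1_add p1_scale add_diff_cancel_right' diff_add_cancel)
  qed
  have "surj p1"
    by (rule lin_inj_surj) (simp_all add: p1_add p1_scale p1_inj)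
  then obtain \<phi> where ph: "p1 \<phi> = one H" by (metis surj_def)
  have Sinj: "inj (S H)"
  proof -
    have "a = 0" if z: "S H a = 0" for a
    proof -
      have "a = mul H a (p1 \<phi>)" by (simp add: ph one_right[OF hopf])
      also have "\<dots> = 0"
      proof (rule ext)
        fix z
        have "mul H a (p1 \<phi>) z = (\<lambda>w. hmul H a w z) (\<lambda>z. sw H t (\<lambda>u v. vscale (fapp \<phi> u) v z))"
          by (simp add: p1_def)
        also have "\<dots> = sw H t (\<lambda>u v. hmul H a (vscale (fapp \<phi> u) v) z)"
          by (rule sw_vec) (simp add: islin_def)
        also have "\<dots> = sw H t (\<lambda>u v. (\<lambda>x y. fapp \<phi> x * y z) u (hmul H a v))"
          by simp
        also have "\<dots> = sw H t (\<lambda>u v. (\<lambda>x y. fapp \<phi> x * y z) (hmul H (S H a) u) v)"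
          by (rule T1R) (rule bilinI, simp_all add: algebra_simps)
        also have "\<dots> = 0" using z by (simp add: fapp_def sw_def)
        finally show "mul H a (p1 \<phi>) z = 0 z" by simp
      qed
      finally show ?thesis .
    qed
    then show ?thesis
      by (intro injI) (metis (no_types) hanti_add hanti_scale diff_self eq_iff_diff_eq_0 add_diff_cancel_right' diff_add_cancel)
  qed
  show ?thesis
    by (rule lin_inj_surj) (simp_all add: Sinj)
qed

end




lemma hact_sw: "hact A H J h r = (\<lambda>m. sw H h (\<lambda>a b. hmul A (hmul A (lin J a) r) (lin J (hanti H b)) m))"
  by (simp add: hact_def sw_def)

lemma bilinM: assumes "bilin F"
  shows "F (x + y) b = F x b + F y b" "F (vscale c x) b = c * F x b"
        "F a (x' + y') = F a x' + F a y'" "F a (vscale c x') = c * F a x'"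
        "F (x + y) = (\<lambda>b. F x b + F y b)" "F (vscale c x) = (\<lambda>b. c * F x b)"
  using assms by (auto simp: bilin_def islin_def)

lemma plus_eta: "(\<lambda>a. x a + y a) = x + y"
  by (simp add: plus_fun_def)
lemma scale_eta: "(\<lambda>a. c * x a) = vscale c x"
  by (simp add: vscale_def)

lemma bilinI': assumes "\<And>x y b. F (x + y) b = F x b + F y b" "\<And>c x b. F (vscale c x) b = c * F x b"
  "\<And>x' y' a. F a (x' + y') = F a x' + F a y'" "\<And>c x' a. F a (vscale c x') = c * F a x'"
  shows "bilin F"
  using assms by (simp add: bilin_def islin_def)

lemma fapp_conv: "fapp (conv H \<phi> \<psi>) h = sw H h (\<lambda>a b. fapp \<phi> a * fapp \<psi> b)"
proof -
  have "fapp (conv H \<phi> \<psi>) h = (\<Sum>i\<in>UNIV. h i * (\<Sum>p\<in>UNIV. hc H i (fst p) (snd p) * \<phi> (fst p) * \<psi> (snd p)))"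
    by (simp add: fapp_def conv_def mult.commute)
  also have "\<dots> = (\<Sum>p\<in>UNIV. (\<Sum>i\<in>UNIV. h i * hc H i (fst p) (snd p)) * (\<phi> (fst p) * \<psi> (snd p)))"
    by (simp add: sum_distrib_left sum_distrib_right mult_ac) (rule sum.swap)
  also have "\<dots> = sw H h (\<lambda>a b. fapp \<phi> a * fapp \<psi> b)"
    by (simp add: sw_def hcomul_def case_prod_beta)
  finally show ?thesis .
qed

lemma vec_eq_fapp: "(\<And>h. fapp u h = fapp v h) \<Longrightarrow> u = v"
  by (rule ext) (metis fapp_ev)

lemma fapp_he: "fapp (he H) w = hcounit H w"
  by (simp add: fapp_def hcounit_def mult.commute)

context
  fixes H :: "('h::finite, 'k::field) hopf_data"
  assumes hopfH: "is_hopf H"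
begin

lemma conv_assoc: "conv H (conv H \<phi> \<psi>) \<chi> = conv H \<phi> (conv H \<psi> \<chi>)"
proof (rule vec_eq_fapp)
  fix h
  have "fapp (conv H (conv H \<phi> \<psi>) \<chi>) h = sw H h (\<lambda>a b. sw H a (\<lambda>a1 a2. fapp \<phi> a1 * fapp \<psi> a2 * fapp \<chi> b))"
    by (simp add: fapp_conv sw_cmult2)
  also have "\<dots> = sw H h (\<lambda>a b. sw H b (\<lambda>b1 b2. fapp \<phi> a * fapp \<psi> b1 * fapp \<chi> b2))"
    by (rule sw_coassoc[OF hopfH])
  also have "\<dots> = fapp (conv H \<phi> (conv H \<psi> \<chi>)) h"
    by (simp add: fapp_conv sw_cmult mult.assoc)
  finally show "fapp (conv H (conv H \<phi> \<psi>) \<chi>) h = fapp (conv H \<phi> (conv H \<psi> \<chi>)) h" .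
qed

lemma conv_unit_l: "conv H (he H) \<phi> = \<phi>"
  by (rule vec_eq_fapp) (simp add: fapp_conv fapp_he sw_counit_l[OF hopfH] islin_def)

lemma conv_unit_r: "conv H \<phi> (he H) = \<phi>"
  by (rule vec_eq_fapp) (simp add: fapp_conv fapp_he sw_counit_r[OF hopfH] islin_def)

definition "gS g = (\<lambda>i. fapp g (hanti H (ev i)))"

lemma fapp_gS: "fapp (gS g) w = fapp g (hanti H w)"
proof -
  have "fapp g (hanti H w) = (\<Sum>i\<in>UNIV. w i * fapp g (hanti H (ev i)))"
    by (rule islin_expand) (simp add: islin_def)
  then show ?thesis by (simp add: gS_def fapp_def mult.commute)
qed

lemma conv_inv_gl: assumes g: "grouplike_dual H g"
  shows "conv_inv H g = gS g" "conv H (gS g) g = he H" "conv H g (gS g) = he H"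
proof -
  have m: "\<And>u v. fapp g (hmul H u v) = fapp g u * fapp g v" and o: "fapp g (hone H) = 1"
    using g by (auto simp: grouplike_dual_def)
  show l: "conv H (gS g) g = he H"
  proof (rule vec_eq_fapp)
    fix h
    have "fapp (conv H (gS g) g) h = sw H h (\<lambda>a b. fapp g (hmul H (hanti H a) b))"
      by (simp add: fapp_conv fapp_gS m)
    also have "\<dots> = hcounit H h * fapp g (hone H)"
      by (rule sw_anti_l[OF hopfH]) (simp add: islin_def)
    finally show "fapp (conv H (gS g) g) h = fapp (he H) h" by (simp add: o fapp_he)
  qed
  show r: "conv H g (gS g) = he H"
  proof (rule vec_eq_fapp)
    fix h
    have "fapp (conv H g (gS g)) h = sw H h (\<lambda>a b. fapp g (hmul H a (hanti H b)))"
      by (simp add: fapp_conv fapp_gS m)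
    also have "\<dots> = hcounit H h * fapp g (hone H)"
      by (rule sw_anti_r[OF hopfH]) (simp add: islin_def)
    finally show "fapp (conv H g (gS g)) h = fapp (he H) h" by (simp add: o fapp_he)
  qed
  show "conv_inv H g = gS g"
    unfolding conv_inv_def
  proof (rule the_equality)
    show "conv H (gS g) g = he H \<and> conv H g (gS g) = he H" using l r by simp
    fix \<psi> assume "conv H \<psi> g = he H \<and> conv H g \<psi> = he H"
    then have a: "conv H \<psi> g = he H" and b: "conv H g \<psi> = he H" by auto
    have "\<psi> = conv H \<psi> (conv H g (gS g))" by (simp add: r conv_unit_r)
    also have "\<dots> = conv H (conv H \<psi> g) (gS g)" by (simp add: conv_assoc)
    also have "\<dots> = gS g" by (simp add: a conv_unit_l)
    finally show "\<psi> = gS g" .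
  qed
qed

end

context
  fixes A :: "('a::finite, 'k::field) hopf_data"
    and H :: "('h::finite, 'k) hopf_data"
    and P :: "'a \<Rightarrow> 'h \<Rightarrow> 'k" and J :: "'h \<Rightarrow> 'a \<Rightarrow> 'k"
  assumes hopfA: "is_hopf A" and hopfH: "is_hopf H"
    and mapP: "is_hopf_map A H P" and mapJ: "is_hopf_map H A J"
    and split: "\<forall>h. lin P (lin J h) = h"
begin

abbreviation "mA \<equiv> hmul A"
abbreviation "mH \<equiv> hmul H"
abbreviation "jj \<equiv> lin J"
abbreviation "pp \<equiv> lin P"
abbreviation "SA \<equiv> hanti A"
abbreviation "SH \<equiv> hanti H"
abbreviation "eA \<equiv> hcounit A"
abbreviation "eH \<equiv> hcounit H"
abbreviation "oA \<equiv> hone A"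
abbreviation "oH \<equiv> hone H"
abbreviation "R \<equiv> coinv A H P"

lemmas AA = assoc[OF hopfA]
lemmas AH = assoc[OF hopfH]
lemma pj[simp]: "pp (jj h) = h" using split by simp
lemma jmul: "jj (mH a b) = mA (jj a) (jj b)" by (rule hmap_mul[OF mapJ])
lemma pmul: "pp (mA a b) = mH (pp a) (pp b)" by (rule hmap_mul[OF mapP])
lemma jone[simp]: "jj oH = oA" by (rule hmap_one[OF mapJ])
lemma pone[simp]: "pp oA = oH" by (rule hmap_one[OF mapP])
lemma jcounit[simp]: "eA (jj h) = eH h" by (rule hmap_counit[OF mapJ])
lemma pcounit[simp]: "eH (pp h) = eA h" by (rule hmap_counit[OF mapP])
lemma oneA_l[simp]: "mA oA a = a" by (rule one_left[OF hopfA])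
lemma oneA_r[simp]: "mA a oA = a" by (rule one_right[OF hopfA])
lemma oneH_l[simp]: "mH oH a = a" by (rule one_left[OF hopfH])
lemma oneH_r[simp]: "mH a oH = a" by (rule one_right[OF hopfH])

lemma commK: "mA r (jj (SH g)) z = sw H g (\<lambda>u v. mA (jj (SH u)) (hact A H J v r) z)"
proof -
  have "sw H g (\<lambda>u v. mA (jj (SH u)) (hact A H J v r) z)
      = sw H g (\<lambda>u v. sw H v (\<lambda>v1 v2. mA (jj (SH u)) (mA (mA (jj v1) r) (jj (SH v2))) z))"
  proof (rule sw_cong)
    fix u v
    have "mA (jj (SH u)) (hact A H J v r) z = (\<lambda>w. mA (jj (SH u)) w z) (\<lambda>m. sw H v (\<lambda>a b. mA (mA (jj a) r) (jj (SH b)) m))"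
      by (simp add: hact_sw)
    also have "\<dots> = sw H v (\<lambda>v1 v2. mA (jj (SH u)) (mA (mA (jj v1) r) (jj (SH v2))) z)"
      by (rule sw_vec) (simp add: islin_def)
    finally show "mA (jj (SH u)) (hact A H J v r) z = sw H v (\<lambda>v1 v2. mA (jj (SH u)) (mA (mA (jj v1) r) (jj (SH v2))) z)" .
  qed
  also have "\<dots> = sw H g (\<lambda>uv1 v2. sw H uv1 (\<lambda>u v1. mA (jj (SH u)) (mA (mA (jj v1) r) (jj (SH v2))) z))"
    by (rule sw_coassoc[OF hopfH, symmetric])
  also have "\<dots> = sw H g (\<lambda>uv1 v2. sw H uv1 (\<lambda>u v1. (\<lambda>w. mA (mA (jj w) r) (jj (SH v2)) z) (mH (SH u) v1)))"
    by (simp add: jmul AA)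
  also have "\<dots> = sw H g (\<lambda>uv1 v2. eH uv1 * mA (mA (jj oH) r) (jj (SH v2)) z)"
  proof -
    have "\<And>uv1 v2. sw H uv1 (\<lambda>u v1. (\<lambda>w. mA (mA (jj w) r) (jj (SH v2)) z) (mH (SH u) v1)) = eH uv1 * mA (mA (jj oH) r) (jj (SH v2)) z"
      by (rule sw_anti_l[OF hopfH]) (simp add: islin_def)
    then show ?thesis by simp
  qed
  also have "\<dots> = mA r (jj (SH g)) z"
    by (simp) (rule sw_counit_l2[OF hopfH], simp add: islin_def)
  finally show ?thesis by simp
qed

lemma hact_counit: "eA (hact A H J g r) = eH g * eA r"
proof -
  have "eA (hact A H J g r) = (\<lambda>w. eA w) (\<lambda>m. sw H g (\<lambda>a b. mA (mA (jj a) r) (jj (SH b)) m))"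
    by (simp add: hact_sw)
  also have "\<dots> = sw H g (\<lambda>a b. eA (mA (mA (jj a) r) (jj (SH b))))"
    by (rule sw_vec) (simp add: islin_def)
  also have "\<dots> = sw H g (\<lambda>a b. eH a * (eA r * eH b))"
    by (simp add: counit_mult[OF hopfA] counit_anti[OF hopfH] mult_ac)
  also have "\<dots> = eA r * eH g"
    by (rule sw_counit_l2[OF hopfH]) (simp add: islin_def algebra_simps)
  finally show ?thesis by simp
qed

lemma hact_lin: "islin (\<lambda>h. hact A H J h r m)"
  by (simp add: hact_sw islin_def)

lemma G1: assumes rR: "r \<in> R" and F: "bilin F"
  shows "sw A (mA (mA (jj a) r) (jj c)) (\<lambda>u w. F u (pp w))
       = sw H a (\<lambda>a1 a2. sw H c (\<lambda>c1 c2. F (mA (mA (jj a1) r) (jj c1)) (mH a2 c2)))"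
proof -
  note FD = bilinM[OF F]
  have "sw A (mA (mA (jj a) r) (jj c)) (\<lambda>u w. F u (pp w))
      = sw A (mA (jj a) r) (\<lambda>p q. sw A (jj c) (\<lambda>e f. F (mA p e) (pp (mA q f))))"
    by (rule sw_mult[OF hopfA]) (rule bilinI', simp_all add: FD)
  also have "\<dots> = sw A (jj a) (\<lambda>c1 d1. sw A r (\<lambda>c2 d2. sw A (jj c) (\<lambda>e f. F (mA (mA c1 c2) e) (pp (mA (mA d1 d2) f)))))"
    by (rule sw_mult[OF hopfA]) (rule bilinI', simp_all add: FD sw_plus_fun sw_cmult)
  also have "\<dots> = sw H a (\<lambda>a1 a2. sw A r (\<lambda>c2 d2. sw A (jj c) (\<lambda>e f. F (mA (mA (jj a1) c2) e) (pp (mA (mA (jj a2) d2) f)))))"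
    by (rule sw_hmap[OF mapJ]) (rule bilinI', simp_all add: FD sw_plus_fun sw_cmult)
  also have "\<dots> = sw H a (\<lambda>a1 a2. sw A r (\<lambda>c2 d2. sw H c (\<lambda>e f. F (mA (mA (jj a1) c2) (jj e)) (pp (mA (mA (jj a2) d2) (jj f))))))"
  proof -
    have "\<And>a1 a2 c2 d2. sw A (jj c) (\<lambda>e f. F (mA (mA (jj a1) c2) e) (pp (mA (mA (jj a2) d2) f)))
        = sw H c (\<lambda>e f. F (mA (mA (jj a1) c2) (jj e)) (pp (mA (mA (jj a2) d2) (jj f))))"
      by (rule sw_hmap[OF mapJ]) (rule bilinI', simp_all add: FD)
    then show ?thesis by simp
  qed
  also have "\<dots> = sw H a (\<lambda>a1 a2. sw A r (\<lambda>c2 d2. (\<lambda>c2 w. sw H c (\<lambda>e f. F (mA (mA (jj a1) c2) (jj e)) (mH (mH a2 w) f))) c2 (pp d2)))"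
    by (simp add: pmul)
  also have "\<dots> = sw H a (\<lambda>a1 a2. sw H c (\<lambda>e f. F (mA (mA (jj a1) r) (jj e)) (mH (mH a2 oH) f)))"
  proof -
    have "\<And>a1 a2. sw A r (\<lambda>c2 d2. (\<lambda>c2 w. sw H c (\<lambda>e f. F (mA (mA (jj a1) c2) (jj e)) (mH (mH a2 w) f))) c2 (pp d2))
      = (\<lambda>c2 w. sw H c (\<lambda>e f. F (mA (mA (jj a1) c2) (jj e)) (mH (mH a2 w) f))) r oH"
      by (rule coinv_sw[OF rR]) (simp add: bilin_def islin_def FD sw_plus_fun sw_cmult)
    then show ?thesis by simp
  qed
  finally show ?thesis by simp
qed

lemma hact_R: assumes rR: "r \<in> R" shows "hact A H J g r \<in> R"
proof (rule coinvI)
  fix F :: "('a \<Rightarrow> 'k) \<Rightarrow> ('h \<Rightarrow> 'k) \<Rightarrow> 'k" assume F: "bilin F"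
  note FD = bilinM[OF F]
  let ?K = "\<lambda>a b. mA (mA (jj a) r) (jj (SH b))"
  have "sw A (hact A H J g r) (\<lambda>u w. F u (pp w)) = (\<lambda>y. sw A y (\<lambda>u w. F u (pp w))) (\<lambda>m. sw H g (\<lambda>a b. ?K a b m))"
    by (simp add: hact_sw)
  also have "\<dots> = sw H g (\<lambda>a b. sw A (?K a b) (\<lambda>u w. F u (pp w)))"
    by (rule sw_vec) (rule islin_sw)
  also have "\<dots> = sw H g (\<lambda>a b. sw H a (\<lambda>a1 a2. sw H (SH b) (\<lambda>c1 c2. F (mA (mA (jj a1) r) (jj c1)) (mH a2 c2))))"
    by (simp add: G1[OF rR F])
  also have "\<dots> = sw H g (\<lambda>a b. sw H a (\<lambda>a1 a2. sw H b (\<lambda>b1 b2. F (?K a1 b2) (mH a2 (SH b1)))))"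
  proof -
    have "\<And>a1 a2 b. sw H (SH b) (\<lambda>c1 c2. F (mA (mA (jj a1) r) (jj c1)) (mH a2 c2)) = sw H b (\<lambda>b1 b2. F (?K a1 b2) (mH a2 (SH b1)))"
      by (rule anti_comult[OF hopfH]) (rule bilinI', simp_all add: FD)
    then show ?thesis by simp
  qed
  also have "\<dots> = sw H g (\<lambda>a1 x. sw H x (\<lambda>a2 b. sw H b (\<lambda>b1 b2. F (?K a1 b2) (mH a2 (SH b1)))))"
    by (rule sw_coassoc[OF hopfH])
  also have "\<dots> = sw H g (\<lambda>a1 x. sw H x (\<lambda>a2b1 b2. sw H a2b1 (\<lambda>a2 b1. F (?K a1 b2) (mH a2 (SH b1)))))"
    by (rule sw_cong, rule sw_coassoc[OF hopfH, symmetric])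
  also have "\<dots> = sw H g (\<lambda>a1 x. sw H x (\<lambda>a2b1 b2. eH a2b1 * F (?K a1 b2) oH))"
  proof -
    have "\<And>a1 a2b1 b2. sw H a2b1 (\<lambda>a2 b1. (\<lambda>w. F (?K a1 b2) w) (mH a2 (SH b1))) = eH a2b1 * F (?K a1 b2) oH"
      by (rule sw_anti_r[OF hopfH]) (simp add: islin_def FD)
    then show ?thesis by simp
  qed
  also have "\<dots> = sw H g (\<lambda>a1 x. F (?K a1 x) oH)"
  proof -
    have "\<And>a1 x. sw H x (\<lambda>a2b1 b2. eH a2b1 * F (?K a1 b2) oH) = F (?K a1 x) oH"
      by (rule sw_counit_l2[OF hopfH]) (simp add: islin_def FD)
    then show ?thesis by simp
  qed
  also have "\<dots> = (\<lambda>w. F w oH) (\<lambda>m. sw H g (\<lambda>a b. ?K a b m))"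
    by (rule sw_vec[symmetric]) (simp add: islin_def FD)
  finally show "sw A (hact A H J g r) (\<lambda>u w. F u (pp w)) = F (hact A H J g r) oH"
    by (simp add: hact_sw)
qed

lemma hact_one: "hact A H J oH r = r"
proof (rule ext)
  fix m
  have "hact A H J oH r m = sw H oH (\<lambda>a b. mA (mA (jj a) r) (jj (SH b)) m)"
    by (simp add: hact_sw)
  also have "\<dots> = mA (mA (jj oH) r) (jj (SH oH)) m"
    by (rule sw_one[OF hopfH]) (rule bilinI, simp_all)
  finally show "hact A H J oH r m = r m" by (simp add: anti_one[OF hopfH])
qed

lemma hact_mult: "hact A H J (mH g h) r = hact A H J g (hact A H J h r)"
proof (rule ext)
  fix m
  let ?K = "\<lambda>a b. mA (mA (jj a) r) (jj (SH b))"
  have "hact A H J (mH g h) r m = sw H (mH g h) (\<lambda>a b. ?K a b m)"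
    by (simp add: hact_sw)
  also have "\<dots> = sw H g (\<lambda>g1 g2. sw H h (\<lambda>h1 h2. ?K (mH g1 h1) (mH g2 h2) m))"
    by (rule sw_mult[OF hopfH]) (rule bilinI, simp_all)
  also have "\<dots> = sw H g (\<lambda>g1 g2. sw H h (\<lambda>h1 h2. mA (mA (jj g1) (?K h1 h2)) (jj (SH g2)) m))"
    by (simp add: jmul anti_mult[OF hopfH] AA)
  also have "\<dots> = sw H g (\<lambda>g1 g2. (\<lambda>w. mA (mA (jj g1) w) (jj (SH g2)) m) (\<lambda>m'. sw H h (\<lambda>h1 h2. ?K h1 h2 m')))"
  proof -
    have "\<And>g1 g2. (\<lambda>w. mA (mA (jj g1) w) (jj (SH g2)) m) (\<lambda>m'. sw H h (\<lambda>h1 h2. ?K h1 h2 m')) = sw H h (\<lambda>h1 h2. mA (mA (jj g1) (?K h1 h2)) (jj (SH g2)) m)"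
      by (rule sw_vec) (simp add: islin_def)
    then show ?thesis by simp
  qed
  also have "\<dots> = hact A H J g (hact A H J h r) m"
    by (simp add: hact_sw)
  finally show "hact A H J (mH g h) r m = hact A H J g (hact A H J h r) m" .
qed

lemma hact_scale: "hact A H J g (vscale c r) = vscale c (hact A H J g r)"
  by (rule ext) (simp add: hact_sw sw_cmult mult.left_commute)

lemma vscale_cancel: assumes "x \<noteq> 0" "vscale c x = vscale d x" shows "c = d"
proof -
  obtain z where "x z \<noteq> 0" using assms(1) by (auto simp: fun_eq_iff)
  moreover have "c * x z = d * x z" using fun_cong[OF assms(2), of z] by simp
  ultimately show ?thesis by simp
qed

lemma jr_comm: "mA (jj h) r = (\<lambda>z. sw H h (\<lambda>a b. mA (hact A H J a r) (jj b) z))"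
proof (rule ext)
  fix z
  have "sw H h (\<lambda>a b. mA (hact A H J a r) (jj b) z) = sw H h (\<lambda>a b. sw H a (\<lambda>a1 a2. mA (mA (mA (jj a1) r) (jj (SH a2))) (jj b) z))"
  proof (rule sw_cong)
    fix a b
    have "mA (hact A H J a r) (jj b) z = (\<lambda>w. mA w (jj b) z) (\<lambda>m. sw H a (\<lambda>a1 a2. mA (mA (jj a1) r) (jj (SH a2)) m))"
      by (simp add: hact_sw)
    also have "\<dots> = sw H a (\<lambda>a1 a2. mA (mA (mA (jj a1) r) (jj (SH a2))) (jj b) z)"
      by (rule sw_vec) (simp add: islin_def)
    finally show "mA (hact A H J a r) (jj b) z = sw H a (\<lambda>a1 a2. mA (mA (mA (jj a1) r) (jj (SH a2))) (jj b) z)" .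
  qed
  also have "\<dots> = sw H h (\<lambda>a1 c. sw H c (\<lambda>a2 b. (\<lambda>w. mA (mA (jj a1) r) (jj w) z) (mH (SH a2) b)))"
    by (simp only: sw_coassoc[OF hopfH]) (simp add: AA jmul)
  also have "\<dots> = sw H h (\<lambda>a1 c. eH c * mA (mA (jj a1) r) (jj oH) z)"
  proof -
    have "\<And>a1 c. sw H c (\<lambda>a2 b. (\<lambda>w. mA (mA (jj a1) r) (jj w) z) (mH (SH a2) b)) = eH c * mA (mA (jj a1) r) (jj oH) z"
      by (rule sw_anti_l[OF hopfH]) (simp add: islin_def)
    then show ?thesis by simp
  qed
  also have "\<dots> = mA (jj h) r z"
    by simp (rule sw_counit_r2[OF hopfH], simp add: islin_def)
  finally show "mA (jj h) r z = sw H h (\<lambda>a b. mA (hact A H J a r) (jj b) z)" by simp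
qed

context
  fixes x :: "'a \<Rightarrow> 'k" and \<Lambda> :: "'h \<Rightarrow> 'k"
  assumes xR: "x \<in> R" and xint: "\<forall>r\<in>R. mA r x = vscale (eA r) x"
    and \<Lambda>int: "\<forall>a. mH a \<Lambda> = vscale (eH a) \<Lambda>" and \<Lambda>nz: "\<Lambda> \<noteq> 0"
begin

lemma SH_surj: "surj SH"
  by (rule anti_surj[OF hopfH, of \<Lambda>]) (simp_all add: \<Lambda>int \<Lambda>nz)

lemma LR: assumes rR: "r \<in> R" shows "mA (mA r (jj h)) x = vscale (eA r) (mA (jj h) x)"
proof -
  obtain g where hg: "h = SH g" using SH_surj by (metis surj_def)
  have "mA (mA r (jj (SH g))) x z = eA r * mA (jj (SH g)) x z" for z
  proof -
    have "mA r (jj (SH g)) = (\<lambda>z'. sw H g (\<lambda>u v. mA (jj (SH u)) (hact A H J v r) z'))"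
      by (rule ext) (rule commK)
    then have "mA (mA r (jj (SH g))) x z = (\<lambda>w. mA w x z) (\<lambda>z'. sw H g (\<lambda>u v. mA (jj (SH u)) (hact A H J v r) z'))"
      by simp
    also have "\<dots> = sw H g (\<lambda>u v. mA (mA (jj (SH u)) (hact A H J v r)) x z)"
      by (rule sw_vec) (simp add: islin_def)
    also have "\<dots> = sw H g (\<lambda>u v. eH v * (eA r * mA (jj (SH u)) x z))"
    proof (rule sw_cong)
      fix u v
      have "mA (hact A H J v r) x = vscale (eA (hact A H J v r)) x"
        using xint hact_R[OF rR] by blast
      then show "mA (mA (jj (SH u)) (hact A H J v r)) x z = eH v * (eA r * mA (jj (SH u)) x z)"
        by (simp add: AA hact_counit)
    qed
    also have "\<dots> = eA r * mA (jj (SH g)) x z"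
      by (rule sw_counit_r2[OF hopfH]) (simp add: islin_def algebra_simps)
    finally show ?thesis .
  qed
  then show ?thesis by (auto simp: hg fun_eq_iff)
qed

lemma hact_x_int: "is_left_integral_in A R (hact A H J h x)"
  unfolding is_left_integral_in_def
proof (intro conjI ballI)
  show "hact A H J h x \<in> R" by (rule hact_R[OF xR])
  fix r assume rR: "r \<in> R"
  show "mA r (hact A H J h x) = vscale (eA r) (hact A H J h x)"
  proof (rule ext)
    fix z
    have "mA r (hact A H J h x) z = (\<lambda>w. mA r w z) (\<lambda>m. sw H h (\<lambda>a b. mA (mA (jj a) x) (jj (SH b)) m))"
      by (simp add: hact_sw)
    also have "\<dots> = sw H h (\<lambda>a b. mA r (mA (mA (jj a) x) (jj (SH b))) z)"
      by (rule sw_vec) (simp add: islin_def)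
    also have "\<dots> = sw H h (\<lambda>a b. eA r * mA (mA (jj a) x) (jj (SH b)) z)"
    proof (rule sw_cong)
      fix a b
      have "mA r (mA (mA (jj a) x) (jj (SH b))) = mA (mA (mA r (jj a)) x) (jj (SH b))" by (simp add: AA)
      then show "mA r (mA (mA (jj a) x) (jj (SH b))) z = eA r * mA (mA (jj a) x) (jj (SH b)) z"
        by (simp add: LR[OF rR])
    qed
    also have "\<dots> = vscale (eA r) (hact A H J h x) z"
      by (simp add: hact_sw sw_cmult)
    finally show "mA r (hact A H J h x) z = vscale (eA r) (hact A H J h x) z" .
  qed
qed

definition "Ep a = (\<lambda>z. sw A a (\<lambda>u v. mA u (jj (pp (SA v))) z))"

lemma Ep_R: "Ep a \<in> R"
proof (rule coinvI)
  fix F :: "('a \<Rightarrow> 'k) \<Rightarrow> ('h \<Rightarrow> 'k) \<Rightarrow> 'k" assume F: "bilin F"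
  note FD = bilinM[OF F]
  let ?K = "\<lambda>u v. mA u (jj (pp (SA v)))"
  have "sw A (Ep a) (\<lambda>c d. F c (pp d)) = (\<lambda>y. sw A y (\<lambda>c d. F c (pp d))) (\<lambda>z. sw A a (\<lambda>u v. ?K u v z))"
    by (simp add: Ep_def)
  also have "\<dots> = sw A a (\<lambda>u v. sw A (?K u v) (\<lambda>c d. F c (pp d)))"
    by (rule sw_vec) (rule islin_sw)
  also have "\<dots> = sw A a (\<lambda>u v. sw A u (\<lambda>u1 u2. sw A v (\<lambda>v1 v2. F (mA u1 (jj (pp (SA v2)))) (mH (pp u2) (pp (SA v1))))))"
  proof (rule sw_cong)
    fix u v
    have "sw A (?K u v) (\<lambda>c d. F c (pp d)) = sw A u (\<lambda>u1 u2. sw A (jj (pp (SA v))) (\<lambda>e f. F (mA u1 e) (pp (mA u2 f))))"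
      by (rule sw_mult[OF hopfA]) (simp add: bilin_def islin_def FD sw_plus_fun sw_cmult)
    also have "\<dots> = sw A u (\<lambda>u1 u2. sw H (pp (SA v)) (\<lambda>e f. F (mA u1 (jj e)) (pp (mA u2 (jj f)))))"
    proof -
      have "\<And>u1 u2. sw A (jj (pp (SA v))) (\<lambda>e f. F (mA u1 e) (pp (mA u2 f))) = sw H (pp (SA v)) (\<lambda>e f. F (mA u1 (jj e)) (pp (mA u2 (jj f))))"
        by (rule sw_hmap[OF mapJ]) (simp add: bilin_def islin_def FD)
      then show ?thesis by simp
    qed
    also have "\<dots> = sw A u (\<lambda>u1 u2. sw A (SA v) (\<lambda>e f. F (mA u1 (jj (pp e))) (pp (mA u2 (jj (pp f))))))"
    proof -
      have "\<And>u1 u2. sw H (pp (SA v)) (\<lambda>e f. F (mA u1 (jj e)) (pp (mA u2 (jj f)))) = sw A (SA v) (\<lambda>e f. F (mA u1 (jj (pp e))) (pp (mA u2 (jj (pp f)))))"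
        by (rule sw_hmap[OF mapP]) (simp add: bilin_def islin_def FD)
      then show ?thesis by simp
    qed
    also have "\<dots> = sw A u (\<lambda>u1 u2. sw A v (\<lambda>v1 v2. F (mA u1 (jj (pp (SA v2)))) (pp (mA u2 (jj (pp (SA v1)))))))"
    proof -
      have "\<And>u1 u2. sw A (SA v) (\<lambda>e f. F (mA u1 (jj (pp e))) (pp (mA u2 (jj (pp f))))) = sw A v (\<lambda>v1 v2. F (mA u1 (jj (pp (SA v2)))) (pp (mA u2 (jj (pp (SA v1))))))"
        by (rule anti_comult[OF hopfA]) (simp add: bilin_def islin_def FD)
      then show ?thesis by simp
    qed
    finally show "sw A (?K u v) (\<lambda>c d. F c (pp d)) = sw A u (\<lambda>u1 u2. sw A v (\<lambda>v1 v2. F (mA u1 (jj (pp (SA v2)))) (mH (pp u2) (pp (SA v1)))))"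
      by (simp add: pmul)
  qed
  also have "\<dots> = sw A a (\<lambda>u1 x'. sw A x' (\<lambda>u2 v. sw A v (\<lambda>v1 v2. F (mA u1 (jj (pp (SA v2)))) (mH (pp u2) (pp (SA v1))))))"
    by (rule sw_coassoc[OF hopfA])
  also have "\<dots> = sw A a (\<lambda>u1 x'. sw A x' (\<lambda>u2v1 v2. sw A u2v1 (\<lambda>u2 v1. (\<lambda>w. F (?K u1 v2) (pp w)) (mA u2 (SA v1)))))"
    by (simp only: pmul) (rule sw_cong, rule sw_coassoc[OF hopfA, symmetric])
  also have "\<dots> = sw A a (\<lambda>u1 x'. sw A x' (\<lambda>u2v1 v2. eA u2v1 * F (?K u1 v2) oH))"
  proof -
    have "\<And>u1 u2v1 v2. sw A u2v1 (\<lambda>u2 v1. (\<lambda>w. F (?K u1 v2) (pp w)) (mA u2 (SA v1))) = eA u2v1 * (\<lambda>w. F (?K u1 v2) (pp w)) oA"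
      by (rule sw_anti_r[OF hopfA]) (simp add: islin_def FD)
    then show ?thesis by simp
  qed
  also have "\<dots> = sw A a (\<lambda>u1 x'. F (?K u1 x') oH)"
  proof -
    have "\<And>u1 x'. sw A x' (\<lambda>u2v1 v2. eA u2v1 * F (?K u1 v2) oH) = F (?K u1 x') oH"
      by (rule sw_counit_l2[OF hopfA]) (simp add: islin_def FD)
    then show ?thesis by simp
  qed
  also have "\<dots> = (\<lambda>w. F w oH) (\<lambda>z. sw A a (\<lambda>u v. ?K u v z))"
    by (rule sw_vec[symmetric]) (simp add: islin_def FD)
  finally show "sw A (Ep a) (\<lambda>c d. F c (pp d)) = F (Ep a) oH"
    by (simp add: Ep_def)
qed

lemma Ep_counit: "eA (Ep a) = eA a"
proof -
  have "eA (Ep a) = (\<lambda>w. eA w) (\<lambda>z. sw A a (\<lambda>u v. mA u (jj (pp (SA v))) z))"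
    by (simp add: Ep_def)
  also have "\<dots> = sw A a (\<lambda>u v. eA (mA u (jj (pp (SA v)))))"
    by (rule sw_vec) (simp add: islin_def)
  also have "\<dots> = sw A a (\<lambda>u v. eA u * eA v)"
    by (simp add: counit_mult[OF hopfA] counit_anti[OF hopfA])
  also have "\<dots> = eA a"
    by (rule sw_counit_r[OF hopfA]) (simp add: islin_def)
  finally show ?thesis .
qed

lemma Ep_mul: "mA a (mA (jj \<Lambda>) x) = mA (Ep a) (mA (jj \<Lambda>) x)"
proof (rule ext)
  fix z
  let ?t = "mA (jj \<Lambda>) x"
  have "mA (Ep a) ?t z = (\<lambda>w. mA w ?t z) (\<lambda>z. sw A a (\<lambda>u v. mA u (jj (pp (SA v))) z))"
    by (simp add: Ep_def)
  also have "\<dots> = sw A a (\<lambda>u v. mA (mA u (jj (pp (SA v)))) ?t z)"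
    by (rule sw_vec) (simp add: islin_def)
  also have "\<dots> = sw A a (\<lambda>u v. eA v * mA u ?t z)"
  proof (rule sw_cong)
    fix u v
    have "mA (mA u (jj (pp (SA v)))) ?t = mA u (mA (jj (mH (pp (SA v)) \<Lambda>)) x)"
      by (simp add: AA jmul)
    also have "\<dots> = vscale (eA v) (mA u ?t)"
      by (simp add: \<Lambda>int counit_anti[OF hopfA])
    finally show "mA (mA u (jj (pp (SA v)))) ?t z = eA v * mA u ?t z" by simp
  qed
  also have "\<dots> = mA a ?t z"
    by (rule sw_counit_r2[OF hopfA]) (simp add: islin_def)
  finally show "mA a ?t z = mA (Ep a) ?t z" by simp
qed

lemma part1: "is_left_integral A (mA (jj \<Lambda>) x)"
  unfolding is_left_integral_def is_left_integral_in_def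
proof (intro conjI ballI)
  fix a :: "'a \<Rightarrow> 'k"
  have "mA a (mA (jj \<Lambda>) x) = mA (mA (Ep a) (jj \<Lambda>)) x"
    by (subst Ep_mul) (simp add: AA)
  also have "\<dots> = vscale (eA a) (mA (jj \<Lambda>) x)"
    by (simp add: LR[OF Ep_R] Ep_counit)
  finally show "mA a (mA (jj \<Lambda>) x) = vscale (eA a) (mA (jj \<Lambda>) x)" .
qed simp

definition "gam = (\<lambda>i. SOME c. hact A H J (ev i) x = vscale c x)"

context
  assumes xnz: "x \<noteq> 0"
    and xuniq: "\<forall>y. is_left_integral_in A R y \<longrightarrow> (\<exists>c. y = vscale c x)"
begin

lemma gam_ev: "hact A H J (ev i) x = vscale (gam i) x"
proof -
  have "\<exists>c. hact A H J (ev i) x = vscale c x" using xuniq hact_x_int by blast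
  then show ?thesis unfolding gam_def by (rule someI_ex)
qed

lemma gam_act: "hact A H J h x = vscale (fapp gam h) x"
proof (rule ext)
  fix m
  have "hact A H J h x m = (\<Sum>i\<in>UNIV. h i * hact A H J (ev i) x m)"
    by (rule islin_expand[OF hact_lin])
  also have "\<dots> = fapp gam h * x m"
    by (simp add: gam_ev fapp_def sum_distrib_left sum_distrib_right mult_ac)
  finally show "hact A H J h x m = vscale (fapp gam h) x m" by simp
qed

lemma gam_grouplike: "grouplike_dual H gam"
  unfolding grouplike_dual_def
proof (intro conjI allI)
  fix g h
  have "vscale (fapp gam (mH g h)) x = vscale (fapp gam g * fapp gam h) x"
    by (simp add: gam_act[symmetric] hact_mult) (simp add: gam_act hact_scale fun_eq_iff mult_ac)
  then show "fapp gam (mH g h) = fapp gam g * fapp gam h" by (rule vscale_cancel[OF xnz])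
next
  have "vscale (fapp gam oH) x = vscale 1 x"
    by (simp add: gam_act[symmetric] hact_one) (simp add: fun_eq_iff)
  then show "fapp gam oH = 1" by (rule vscale_cancel[OF xnz])
qed

definition "Lp h = (\<lambda>z. sw H h (\<lambda>a b. fapp gam a * b z))"

lemma jx_gam: "mA (jj h) x = mA x (jj (Lp h))"
proof (rule ext)
  fix z
  have "mA (jj h) x z = sw H h (\<lambda>a b. mA x (jj (vscale (fapp gam a) b)) z)"
    by (subst jr_comm) (simp add: gam_act)
  also have "\<dots> = (\<lambda>w. mA x (jj w) z) (\<lambda>z. sw H h (\<lambda>a b. vscale (fapp gam a) b z))"
    by (rule sw_vec[symmetric]) (simp add: islin_def)
  finally show "mA (jj h) x z = mA x (jj (Lp h)) z" by (simp add: Lp_def)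
qed

lemma Lp_inv: "h = (\<lambda>z. sw H (Lp h) (\<lambda>a b. fapp gam (SH a) * b z))"
proof (rule ext)
  fix z
  have g: "grouplike_dual H gam" by (rule gam_grouplike)
  have "sw H (Lp h) (\<lambda>a b. fapp gam (SH a) * b z) = (\<lambda>w. sw H w (\<lambda>a b. fapp gam (SH a) * b z)) (\<lambda>z. sw H h (\<lambda>a b. vscale (fapp gam a) b z))"
    by (simp add: Lp_def)
  also have "\<dots> = sw H h (\<lambda>a b. fapp gam a * sw H b (\<lambda>b1 b2. fapp gam (SH b1) * b2 z))"
    by (subst sw_vec) (simp_all add: islin_def)
  also have "\<dots> = sw H h (\<lambda>ab1 b2. sw H ab1 (\<lambda>a b1. (\<lambda>w. fapp gam w * b2 z) (mH a (SH b1))))"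
  proof -
    have "sw H h (\<lambda>a b. fapp gam a * sw H b (\<lambda>b1 b2. fapp gam (SH b1) * b2 z)) = sw H h (\<lambda>a b. sw H b (\<lambda>b1 b2. (\<lambda>w. fapp gam w * b2 z) (mH a (SH b1))))"
      using g by (simp add: grouplike_dual_def sw_cmult[symmetric] mult_ac)
    also have "\<dots> = sw H h (\<lambda>ab1 b2. sw H ab1 (\<lambda>a b1. (\<lambda>w. fapp gam w * b2 z) (mH a (SH b1))))"
      by (rule sw_coassoc[OF hopfH, symmetric])
    finally show ?thesis .
  qed
  also have "\<dots> = sw H h (\<lambda>ab1 b2. eH ab1 * (fapp gam oH * b2 z))"
  proof -
    have "\<And>ab1 b2. sw H ab1 (\<lambda>a b1. (\<lambda>w. fapp gam w * b2 z) (mH a (SH b1))) = eH ab1 * (fapp gam oH * b2 z)"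
      by (rule sw_anti_r[OF hopfH]) (simp add: islin_def algebra_simps)
    then show ?thesis by simp
  qed
  also have "\<dots> = h z"
    using g by (simp add: grouplike_dual_def) (rule sw_counit_l2[OF hopfH], simp add: islin_def)
  finally show "h z = sw H (Lp h) (\<lambda>a b. fapp gam (SH a) * b z)" by simp
qed

lemma xj_zero: assumes z0: "mA x (jj h) = 0" shows "h = 0"
proof -
  have key: "x z * fapp \<phi> h = 0" for z \<phi>
  proof -
    define F where "F = (\<lambda>(u::'a\<Rightarrow>'k) (w::'h\<Rightarrow>'k). sw H w (\<lambda>w1 w2. mA u (jj (SH w1)) z * fapp \<phi> w2))"
    have F: "bilin F" unfolding F_def by (simp add: bilin_def islin_def algebra_simps sw_plus_fun sw_cmult)
    note FD = bilinM[OF F]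
    have "sw A (mA x (jj h)) (\<lambda>u v. F u (pp v)) = sw A x (\<lambda>x1 x2. sw A (jj h) (\<lambda>c d. F (mA x1 c) (pp (mA x2 d))))"
      by (rule sw_mult[OF hopfA]) (simp add: bilin_def islin_def FD sw_plus_fun sw_cmult)
    also have "\<dots> = sw A x (\<lambda>x1 x2. sw H h (\<lambda>c d. F (mA x1 (jj c)) (mH (pp x2) d)))"
    proof -
      have "\<And>x1 x2. sw A (jj h) (\<lambda>c d. F (mA x1 c) (pp (mA x2 d))) = sw H h (\<lambda>c d. F (mA x1 (jj c)) (pp (mA x2 (jj d))))"
        by (rule sw_hmap[OF mapJ]) (simp add: bilin_def islin_def FD)
      then show ?thesis by (simp add: pmul)
    qed
    also have "\<dots> = sw H h (\<lambda>c d. sw A x (\<lambda>x1 x2. (\<lambda>u w. F (mA u (jj c)) (mH w d)) x1 (pp x2)))"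
      by (rule sw_swap)
    also have "\<dots> = sw H h (\<lambda>c d. F (mA x (jj c)) d)"
    proof -
      have "\<And>c d. sw A x (\<lambda>x1 x2. (\<lambda>u w. F (mA u (jj c)) (mH w d)) x1 (pp x2)) = (\<lambda>u w. F (mA u (jj c)) (mH w d)) x oH"
        by (rule coinv_sw[OF xR]) (simp add: bilin_def islin_def FD)
      then show ?thesis by simp
    qed
    also have "\<dots> = sw H h (\<lambda>cd1 d2. sw H cd1 (\<lambda>c d1. (\<lambda>w. mA x (jj w) z * fapp \<phi> d2) (mH c (SH d1))))"
      unfolding F_def by (subst sw_coassoc[OF hopfH, symmetric]) (simp add: AA jmul)
    also have "\<dots> = sw H h (\<lambda>cd1 d2. eH cd1 * (x z * fapp \<phi> d2))"
    proof -
      have "\<And>cd1 d2. sw H cd1 (\<lambda>c d1. (\<lambda>w. mA x (jj w) z * fapp \<phi> d2) (mH c (SH d1))) = eH cd1 * (mA x (jj oH) z * fapp \<phi> d2)"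
        by (rule sw_anti_r[OF hopfH]) (simp add: islin_def algebra_simps)
      then show ?thesis by simp
    qed
    also have "\<dots> = x z * fapp \<phi> h"
      by (rule sw_counit_l2[OF hopfH]) (simp add: islin_def algebra_simps)
    finally show ?thesis using z0 by simp
  qed
  obtain z where "x z \<noteq> 0" using xnz by (auto simp: fun_eq_iff)
  with key have "\<And>\<phi>. fapp \<phi> h = 0" by (metis mult_eq_0_iff)
  then show "h = 0" by (metis (full_types) fapp_def sum_ev_left zero_fun_def ext)
qed

lemma t0_nz: "mA (jj \<Lambda>) x \<noteq> 0"
proof
  assume "mA (jj \<Lambda>) x = 0"
  then have "Lp \<Lambda> = 0" using xj_zero jx_gam by simp
  have "\<Lambda> = (\<lambda>z. sw H (Lp \<Lambda>) (\<lambda>a b. fapp gam (SH a) * b z))" by (rule Lp_inv)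
  also have "\<dots> = (\<lambda>z. 0)" using \<open>Lp \<Lambda> = 0\<close> by simp
  finally have "\<Lambda> = 0" by (simp add: zero_fun_def)
  with \<Lambda>nz show False by simp
qed

context
  fixes \<alpha>R :: "'a \<Rightarrow> 'k" and \<alpha>H :: "'h \<Rightarrow> 'k"
  assumes \<alpha>R: "\<forall>r\<in>R. mA x r = vscale (fapp \<alpha>R r) x"
    and \<alpha>H: "\<forall>h. mH \<Lambda> h = vscale (fapp \<alpha>H h) \<Lambda>"
begin

lemma t0_int: "\<And>a. mA a (mA (jj \<Lambda>) x) = vscale (eA a) (mA (jj \<Lambda>) x)"
  using part1 by (simp add: is_left_integral_def is_left_integral_in_def)

lemma LSA: assumes "is_left_integral A t'" shows "\<exists>c. t' = vscale c (mA (jj \<Lambda>) x)"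
proof -
  have "\<And>a. mA a t' = vscale (eA a) t'" using assms by (simp add: is_left_integral_def is_left_integral_in_def)
  then show ?thesis by (rule LS_unique[OF hopfA t0_int t0_nz])
qed

definition "bet = (\<lambda>i. SOME c. mA (mA (jj \<Lambda>) x) (jj (ev i)) = vscale c (mA (jj \<Lambda>) x))"

lemma bet_ev: "mA (mA (jj \<Lambda>) x) (jj (ev i)) = vscale (bet i) (mA (jj \<Lambda>) x)"
proof -
  have "is_left_integral A (mA (mA (jj \<Lambda>) x) (jj (ev i)))"
    unfolding is_left_integral_def is_left_integral_in_def
  proof (intro conjI ballI)
    fix a :: "'a \<Rightarrow> 'k"
    show "mA a (mA (mA (jj \<Lambda>) x) (jj (ev i))) = vscale (eA a) (mA (mA (jj \<Lambda>) x) (jj (ev i)))"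
      by (subst AA[symmetric]) (simp add: t0_int)
  qed simp
  then have "\<exists>c. mA (mA (jj \<Lambda>) x) (jj (ev i)) = vscale c (mA (jj \<Lambda>) x)" by (rule LSA)
  then show ?thesis unfolding bet_def by (rule someI_ex)
qed

lemma bet_act: "mA (mA (jj \<Lambda>) x) (jj h) = vscale (fapp bet h) (mA (jj \<Lambda>) x)"
proof (rule ext)
  fix z
  have "mA (mA (jj \<Lambda>) x) (jj h) z = (\<Sum>i\<in>UNIV. h i * mA (mA (jj \<Lambda>) x) (jj (ev i)) z)"
    by (rule islin_expand) (simp add: islin_def)
  also have "\<dots> = fapp bet h * mA (jj \<Lambda>) x z"
    by (simp add: bet_ev fapp_def sum_distrib_left sum_distrib_right mult_ac)
  finally show "mA (mA (jj \<Lambda>) x) (jj h) z = vscale (fapp bet h) (mA (jj \<Lambda>) x) z" by simp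
qed

lemma conv_gb: "conv H gam bet = \<alpha>H"
proof (rule vec_eq_fapp)
  fix h
  let ?t = "mA (jj \<Lambda>) x"
  let ?W = "\<lambda>z. sw H h (\<lambda>a b. mA (mA (jj \<Lambda>) (hact A H J a x)) (jj b) z)"
  have wa: "?W z = fapp (conv H gam bet) h * ?t z" for z
  proof -
    have "?W z = sw H h (\<lambda>a b. fapp gam a * fapp bet b * ?t z)"
      by (rule sw_cong) (simp add: gam_act AA[symmetric] bet_act)
    also have "\<dots> = fapp (conv H gam bet) h * ?t z"
      by (simp add: fapp_conv sw_cmult2)
    finally show ?thesis .
  qed
  have wb: "?W z = fapp \<alpha>H h * ?t z" for z
  proof -
    have "mA (jj \<Lambda>) (mA (jj h) x) z = (\<lambda>w. mA (jj \<Lambda>) w z) (\<lambda>z. sw H h (\<lambda>a b. mA (hact A H J a x) (jj b) z))"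
      by (subst jr_comm) simp
    also have "\<dots> = ?W z"
      by (subst sw_vec) (simp_all add: islin_def AA)
    finally have "?W z = mA (jj \<Lambda>) (mA (jj h) x) z" by simp
    also have "\<dots> = mA (jj (mH \<Lambda> h)) x z" by (simp add: jmul AA)
    also have "\<dots> = fapp \<alpha>H h * ?t z" by (simp add: \<alpha>H)
    finally show ?thesis .
  qed
  obtain z where "?t z \<noteq> 0" using t0_nz by (auto simp: fun_eq_iff)
  then show "fapp (conv H gam bet) h = fapp \<alpha>H h" using wa[of z] wb[of z] by simp
qed

lemma part3: "\<forall>t. is_left_integral A t \<and> t \<noteq> vzero \<longrightarrow>
          (\<forall>r\<in>coinv A H P. \<forall>h.
             hmul A t (hmul A r (lin J h)) =
               vscale (fapp \<alpha>R r * fapp (conv H (conv_inv H gam) \<alpha>H) h) t)"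
proof (intro allI impI ballI)
  fix t r h assume t: "is_left_integral A t \<and> t \<noteq> vzero" and rR: "r \<in> coinv A H P"
  obtain c where tc: "t = vscale c (mA (jj \<Lambda>) x)" using LSA t by blast
  have ci: "conv H (conv_inv H gam) \<alpha>H = bet"
  proof -
    have "conv H (conv_inv H gam) \<alpha>H = conv H (gS H gam) (conv H gam bet)"
      by (simp add: conv_gb conv_inv_gl(1)[OF hopfH gam_grouplike])
    also have "\<dots> = bet"
      by (simp add: conv_assoc[OF hopfH, symmetric] conv_inv_gl(2)[OF hopfH gam_grouplike] conv_unit_l[OF hopfH])
    finally show ?thesis .
  qed
  have "mA (mA (jj \<Lambda>) x) (mA r (jj h)) = mA (jj \<Lambda>) (mA (mA x r) (jj h))" by (simp add: AA)
  also have "\<dots> = vscale (fapp \<alpha>R r) (mA (mA (jj \<Lambda>) x) (jj h))" using \<alpha>R rR by (simp add: AA)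
  also have "\<dots> = vscale (fapp \<alpha>R r * fapp bet h) (mA (jj \<Lambda>) x)"
    by (simp add: bet_act fun_eq_iff mult.assoc)
  finally show "hmul A t (hmul A r (lin J h)) = vscale (fapp \<alpha>R r * fapp (conv H (conv_inv H gam) \<alpha>H) h) t"
    by (simp add: tc ci fun_eq_iff mult_ac)
qed

lemma main_all: "is_left_integral A (hmul A (lin J \<Lambda>) x) \<and> hmul A (lin J \<Lambda>) x \<noteq> vzero \<and>
    (\<exists>\<gamma>. grouplike_dual H \<gamma> \<and>
       (\<forall>h. hact A H J h x = vscale (fapp \<gamma> h) x) \<and>
       (\<forall>t. is_left_integral A t \<and> t \<noteq> vzero \<longrightarrow>
          (\<forall>r\<in>coinv A H P. \<forall>h.
             hmul A t (hmul A r (lin J h)) =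
               vscale (fapp \<alpha>R r * fapp (conv H (conv_inv H \<gamma>) \<alpha>H) h) t)))"
  using part1 t0_nz gam_grouplike gam_act part3 by (auto simp: vzero_eq)

end

end

end

end

theorem mainTheorem7:
  fixes A :: "('a::finite, 'k::field) hopf_data"
    and H :: "('h::finite, 'k) hopf_data"
    and P :: "'a \<Rightarrow> 'h \<Rightarrow> 'k" and J :: "'h \<Rightarrow> 'a \<Rightarrow> 'k"
    and x :: "'a \<Rightarrow> 'k" and \<alpha>R :: "'a \<Rightarrow> 'k"
    and \<Lambda> :: "'h \<Rightarrow> 'k" and \<alpha>H :: "'h \<Rightarrow> 'k"
  assumes hopfA: "is_hopf A" and hopfH: "is_hopf H"
    and mapP: "is_hopf_map A H P" and mapJ: "is_hopf_map H A J"
    and split: "\<forall>h. lin P (lin J h) = h"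
    and xint: "is_left_integral_in A (coinv A H P) x" and xnz: "x \<noteq> vzero"
    and xuniq: "\<forall>y. is_left_integral_in A (coinv A H P) y \<longrightarrow> (\<exists>c. y = vscale c x)"
    and \<alpha>R: "\<forall>r\<in>coinv A H P. hmul A x r = vscale (fapp \<alpha>R r) x"
    and \<Lambda>int: "is_left_integral H \<Lambda>" and \<Lambda>nz: "\<Lambda> \<noteq> vzero"
    and \<alpha>Hg: "grouplike_dual H \<alpha>H"
    and \<alpha>H: "\<forall>h. hmul H \<Lambda> h = vscale (fapp \<alpha>H h) \<Lambda>"
  shows "is_left_integral A (hmul A (lin J \<Lambda>) x) \<and> hmul A (lin J \<Lambda>) x \<noteq> vzero \<and>
    (\<exists>\<gamma>. grouplike_dual H \<gamma> \<and>
       (\<forall>h. hact A H J h x = vscale (fapp \<gamma> h) x) \<and>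
       (\<forall>t. is_left_integral A t \<and> t \<noteq> vzero \<longrightarrow>
          (\<forall>r\<in>coinv A H P. \<forall>h.
             hmul A t (hmul A r (lin J h)) =
               vscale (fapp \<alpha>R r * fapp (conv H (conv_inv H \<gamma>) \<alpha>H) h) t)))"
proof -
  have xR: "x \<in> coinv A H P" and xi: "\<forall>r\<in>coinv A H P. hmul A r x = vscale (hcounit A r) x"
    using xint by (auto simp: is_left_integral_in_def)
  have Li: "\<forall>a. hmul H a \<Lambda> = vscale (hcounit H a) \<Lambda>"
    using \<Lambda>int by (simp add: is_left_integral_def is_left_integral_in_def)
  have xnz': "x \<noteq> 0" and Lnz': "\<Lambda> \<noteq> 0" using xnz \<Lambda>nz by (simp_all add: vzero_eq)
  show ?thesis
    by (rule main_all[OF hopfA hopfH mapP mapJ split xR xi Li Lnz' xnz' xuniq \<alpha>R \<alpha>H])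
qed


end
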